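(* Let $G$ be a finite graph, and let $L$ be an induced subgraph of $G$. Let $\mathcal{F}$ be a set of connected subgraphs of $L$. Let $k,\theta\in\mathbb{N}$ and $r,r',\xi,\eta\in\mathbb{R}_{\ge0}$ with $r'\ge r/2$. Let $Z\subseteq V(G)$ with $N_G(V(L))\subseteq Z$ be $(\xi,\eta)$-centered in $G$. If $L$ does not contain $k$ members of $\mathcal{F}$ pairwise at distance in $G$ at least $r$, then there exist $Z^*\subseteq V(G)$ with $N_G^{\le r'}[Z]\subseteq Z^*\subseteq N_G^{\le r'}[Z]\cup V(L)$ and a (possibly empty) set $\mathcal{H}$ of disjoint connected induced subgraphs of $L$ with $|\mathcal{H}|\le k-1$ such that 1. $Z^*$ is $(\xi+\max\{2k-3,1\}\cdot(3\theta-3),\,\eta+2r')$-centered in $G$ and intersects all members of $\mathcal{F}\setminus(\mathcal{F}\cap\bigcup_{H\in\mathcal{H}}H)$, 2. $Z^*\setminus N_G^{\le 2r'}[Z]$ is $(\max\{2k-3,1\}\cdot(3\theta-3),\,2r')$-centered in $G$, and 3. for every $H\in\mathcal{H}$, the $(G,\mathcal{F}\cap H,r',\theta,Z^* )$-tangle in $H$ exists, $N_G(V(H))\subseteq Z^*$, and $H$ contains every component $C$ of $L-Z^*$ with $V(H)\cap V(C)\ne\emptyset$.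
   Context: $\operatorname{dist}_G$ is graph distance in $G$, extended to sets and subgraphs by minima; $N_G^{\le r}[S]=\{v:\operatorname{dist}_G(v,S)\le r\}$, $N_G(S)=N_G^{\le1}[S]\setminus S$. A set $Z$ is $(k,r)$-centered in $G$ if $Z\subseteq N_G^{\le r}[W]$ for some $W$ with $|W|\le k$. For a subgraph $A$ and vertex set $S$, $A-S$ deletes $S\cap V(A)$. For a set $\mathcal{F}$ of subgraphs, $\mathcal{F}-S$ is the set of members disjoint from $S$, and for a subgraph $L'$, $\mathcal{F}\cap L'$ is the set of members that are subgraphs of $L'$. A separation of a graph $L'$ is a pair $(A,B)$ of edge-disjoint subgraphs with $A\cup B=L'$, of order $|V(A)\cap V(B)|$. A tangle in $L'$ of order $\theta$ is a set $\mathcal{T}$ of separations of $L'$ of order less than $\theta$ such that (T1) for every separation $(A,B)$ of order less than $\theta$, $(A,B)\in\mathcal{T}$ or $(B,A)\in\mathcal{T}$; (T2) no three members $(A_i,B_i)$ satisfy $A_1\cup A_2\cup A_3=L'$; (T3) $V(A)\ne V(L')$ for all $(A,B)\in\mathcal{T}$. For an induced subgraph $L'$ of $G$, a set $\mathcal{F}'$ of subgraphs of $L'$, $r'\ge0$, $\theta\in\mathbb{N}$ and $Z'\subseteq V(G)$, the $(G,\mathcal{F}',r',\theta,Z')$-tangle in $L'$ is the set of all separations $(A,B)$ of $L'$ of order less than $\theta$ such that $A-N_G^{\le r'}[V(A\cap B)]$ contains no member of $\mathcal{F}'-N_G^{\le r'}[Z']$ but $B-N_G^{\le r'}[V(A\cap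 B)]$ contains a member of $\mathcal{F}'-N_G^{\le r'}[Z']$; it is said to exist when this set is a tangle in $L'$ of order $\theta$. *)

theory Defs
  imports Main "HOL-Library.Extended_Real"
begin

text \<open>Finite simple undirected graphs: a pair (vertex set, edge set), edges being
  two-element vertex sets. Subgraphs are represented the same way.\<close>

type_synonym 'a ugraph = "'a set \<times> 'a set set"

definition V :: "'a ugraph \<Rightarrow> 'a set" where "V G = fst G"
definition E :: "'a ugraph \<Rightarrow> 'a set set" where "E G = snd G"

definition finite_graph :: "'a ugraph \<Rightarrow> bool" where
  "finite_graph G \<longleftrightarrow> finite (V G) \<and>
     (\<forall>e\<in>E G. \<exists>u v. e = {u, v} \<and> u \<noteq> v \<and> u \<in> V G \<and> v \<in> V G)"

definition subgraph :: "'a ugraph \<Rightarrow> 'a ugraph \<Rightarrow> bool" where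
  "subgraph A H \<longleftrightarrow> V A \<subseteq> V H \<and> E A \<subseteq> E H \<and> (\<forall>e\<in>E A. e \<subseteq> V A)"

definition induced_subgraph :: "'a ugraph \<Rightarrow> 'a ugraph \<Rightarrow> bool" where
  "induced_subgraph A H \<longleftrightarrow> V A \<subseteq> V H \<and> E A = {e \<in> E H. e \<subseteq> V A}"

text \<open>Walks as vertex lists; reach G n u v: there is a walk with n edges from u to v in G.\<close>
definition walk :: "'a ugraph \<Rightarrow> 'a list \<Rightarrow> bool" where
  "walk G xs \<longleftrightarrow> xs \<noteq> [] \<and> set xs \<subseteq> V G \<and>
     (\<forall>i. Suc i < length xs \<longrightarrow> {xs ! i, xs ! Suc i} \<in> E G)"

definition reach :: "'a ugraph \<Rightarrow> nat \<Rightarrow> 'a \<Rightarrow> 'a \<Rightarrow> bool" where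
  "reach G n u v \<longleftrightarrow> (\<exists>xs. walk G xs \<and> hd xs = u \<and> last xs = v \<and> length xs = Suc n)"

definition connected :: "'a ugraph \<Rightarrow> bool" where
  "connected A \<longleftrightarrow> V A \<noteq> {} \<and> (\<forall>u\<in>V A. \<forall>v\<in>V A. \<exists>n. reach A n u v)"

text \<open>Graph distance (in enat, \<infinity> if unreachable).\<close>
definition gdist :: "'a ugraph \<Rightarrow> 'a \<Rightarrow> 'a \<Rightarrow> enat" where
  "gdist G u v = (INF n \<in> {n. reach G n u v}. enat n)"

definition setdist :: "'a ugraph \<Rightarrow> 'a set \<Rightarrow> 'a set \<Rightarrow> ereal" where
  "setdist G S T = (INF p \<in> S \<times> T. ereal_of_enat (gdist G (fst p) (snd p)))"

definition ball :: "'a ugraph \<Rightarrow> real \<Rightarrow> 'a set \<Rightarrow> 'a set" where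
  "ball G r S = {v \<in> V G. setdist G {v} S \<le> ereal r}"

definition nbhd :: "'a ugraph \<Rightarrow> 'a set \<Rightarrow> 'a set" where
  "nbhd G S = ball G 1 S - S"

definition centered :: "'a ugraph \<Rightarrow> real \<Rightarrow> real \<Rightarrow> 'a set \<Rightarrow> bool" where
  "centered G k r Z \<longleftrightarrow> (\<exists>W. finite W \<and> real (card W) \<le> k \<and> Z \<subseteq> ball G r W)"

definition del :: "'a ugraph \<Rightarrow> 'a set \<Rightarrow> 'a ugraph" where
  "del A S = (V A - S, {e \<in> E A. e \<inter> S = {}})"

definition avoid :: "'a ugraph set \<Rightarrow> 'a set \<Rightarrow> 'a ugraph set" where
  "avoid F S = {X \<in> F. V X \<inter> S = {}}"

definition members_in :: "'a ugraph set \<Rightarrow> 'a ugraph \<Rightarrow> 'a ugraph set" where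
  "members_in F L' = {X \<in> F. subgraph X L'}"

definition gunion :: "'a ugraph set \<Rightarrow> 'a ugraph" where
  "gunion \<H> = (\<Union>H\<in>\<H>. V H, \<Union>H\<in>\<H>. E H)"

definition component :: "'a ugraph \<Rightarrow> 'a ugraph \<Rightarrow> bool" where
  "component C A \<longleftrightarrow> induced_subgraph C A \<and> connected C \<and>
     (\<forall>e\<in>E A. e \<inter> V C \<noteq> {} \<longrightarrow> e \<subseteq> V C)"

definition separation :: "'a ugraph \<Rightarrow> 'a ugraph \<Rightarrow> 'a ugraph \<Rightarrow> bool" where
  "separation L' A B \<longleftrightarrow> subgraph A L' \<and> subgraph B L' \<and> E A \<inter> E B = {} \<and>
     V A \<union> V B = V L' \<and> E A \<union> E B = E L'"

definition sep_order :: "'a ugraph \<Rightarrow> 'a ugraph \<Rightarrow> nat" where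
  "sep_order A B = card (V A \<inter> V B)"

definition is_tangle :: "'a ugraph \<Rightarrow> ('a ugraph \<times> 'a ugraph) set \<Rightarrow> nat \<Rightarrow> bool" where
  "is_tangle L' T \<theta> \<longleftrightarrow>
     (\<forall>(A,B)\<in>T. separation L' A B \<and> sep_order A B < \<theta>) \<and>
     (\<forall>A B. separation L' A B \<and> sep_order A B < \<theta> \<longrightarrow> (A,B) \<in> T \<or> (B,A) \<in> T) \<and>
     (\<forall>(A1,B1)\<in>T. \<forall>(A2,B2)\<in>T. \<forall>(A3,B3)\<in>T.
         \<not> (V A1 \<union> V A2 \<union> V A3 = V L' \<and> E A1 \<union> E A2 \<union> E A3 = E L')) \<and>
     (\<forall>(A,B)\<in>T. V A \<noteq> V L')"

definition gtangle :: "'a ugraph \<Rightarrow> 'a ugraph set \<Rightarrow> real \<Rightarrow> nat \<Rightarrow> 'a set \<Rightarrow> 'a ugraph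
    \<Rightarrow> ('a ugraph \<times> 'a ugraph) set" where
  "gtangle G F' r' \<theta> Z' L' = {(A,B). separation L' A B \<and> sep_order A B < \<theta> \<and>
     \<not> (\<exists>X\<in>avoid F' (ball G r' Z'). subgraph X (del A (ball G r' (V A \<inter> V B)))) \<and>
     (\<exists>X\<in>avoid F' (ball G r' Z'). subgraph X (del B (ball G r' (V A \<inter> V B))))}"

definition gtangle_exists :: "'a ugraph \<Rightarrow> 'a ugraph set \<Rightarrow> real \<Rightarrow> nat \<Rightarrow> 'a set \<Rightarrow> 'a ugraph \<Rightarrow> bool" where
  "gtangle_exists G F' r' \<theta> Z' L' \<longleftrightarrow> is_tangle L' (gtangle G F' r' \<theta> Z' L') \<theta>"

end

theory Submission
  imports Defs
begin


section \<open>Walks and reach\<close>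

lemma reach_in: "reach H n u v \<Longrightarrow> u \<in> V H \<and> v \<in> V H"
  unfolding reach_def walk_def
  by (metis hd_in_set last_in_set subsetD)

lemma reach_0: "reach H 0 u v \<longleftrightarrow> u = v \<and> u \<in> V H"
proof
  assume "reach H 0 u v"
  then obtain xs where "walk H xs" "hd xs = u" "last xs = v" "length xs = 1"
    unfolding reach_def by auto
  then show "u = v \<and> u \<in> V H"
    unfolding walk_def by (cases xs) auto
next
  assume "u = v \<and> u \<in> V H"
  then show "reach H 0 u v" unfolding reach_def walk_def
    by (intro exI[of _ "[u]"]) auto
qed

lemma reach_Suc: "reach H (Suc n) u w \<longleftrightarrow> (\<exists>v. u \<in> V H \<and> {u,v} \<in> E H \<and> reach H n v w)"
proof
  assume "reach H (Suc n) u w"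
  then obtain xs where xs: "walk H xs" "hd xs = u" "last xs = w" "length xs = Suc (Suc n)"
    unfolding reach_def by auto
  then obtain y ys where xsc: "xs = u # y # ys" by (cases xs; cases "tl xs") auto
  have w1: "walk H (y # ys)" unfolding walk_def
  proof (intro conjI allI impI)
    show "set (y # ys) \<subseteq> V H" using xs(1) unfolding walk_def xsc by auto
    fix i assume "Suc i < length (y # ys)"
    then have "Suc (Suc i) < length xs" using xsc by simp
    then have "{xs ! Suc i, xs ! Suc (Suc i)} \<in> E H" using xs(1) unfolding walk_def by blast
    then show "{(y # ys) ! i, (y # ys) ! Suc i} \<in> E H" unfolding xsc by simp
  qed simp
  have "{xs!0, xs!Suc 0} \<in> E H" using xs(1) xs(4) unfolding walk_def by simp
  then have "{u, y} \<in> E H" unfolding xsc by simp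
  moreover have "u \<in> V H" using xs(1) unfolding walk_def xsc by auto
  moreover have "reach H n y w" unfolding reach_def
    using w1 xs(3,4) unfolding xsc by (intro exI[of _ "y#ys"]) auto
  ultimately show "\<exists>v. u \<in> V H \<and> {u,v} \<in> E H \<and> reach H n v w" by blast
next
  assume "\<exists>v. u \<in> V H \<and> {u,v} \<in> E H \<and> reach H n v w"
  then obtain v ys where a: "u \<in> V H" "{u,v} \<in> E H" "walk H ys" "hd ys = v" "last ys = w" "length ys = Suc n"
    unfolding reach_def by auto
  have "walk H (u # ys)" unfolding walk_def
  proof (intro conjI allI impI)
    show "set (u # ys) \<subseteq> V H" using a unfolding walk_def by auto
    fix i assume i: "Suc i < length (u # ys)"
    show "{(u # ys) ! i, (u # ys) ! Suc i} \<in> E H"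
    proof (cases i)
      case 0
      have "ys \<noteq> []" using a(6) by auto
      then have "ys ! 0 = v" using a(4) by (simp add: hd_conv_nth)
      then show ?thesis using a(2) 0 by simp
    next
      case (Suc j)
      then have "Suc j < length ys" using i by simp
      then have "{ys ! j, ys ! Suc j} \<in> E H" using a(3) unfolding walk_def by blast
      then show ?thesis using Suc by simp
    qed
  qed simp
  moreover have "ys \<noteq> []" using a(6) by auto
  ultimately show "reach H (Suc n) u w" unfolding reach_def using a
    by (intro exI[of _ "u#ys"]) simp
qed

lemma reach_trans: "reach H n u v \<Longrightarrow> reach H m v w \<Longrightarrow> reach H (n + m) u w"
proof (induction n arbitrary: u)
  case 0 then show ?case by (auto simp add: reach_0)
next
  case (Suc n)
  then obtain x where x: "u \<in> V H" "{u,x} \<in> E H" "reach H n x v" by (auto simp: reach_Suc)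
  have "reach H (n + m) x w" using Suc.IH[OF x(3) Suc.prems(2)] .
  then have "reach H (Suc (n + m)) u w" using x reach_Suc by metis
  then show ?case by simp
qed

lemma reach_edge: "{u,v} \<in> E H \<Longrightarrow> u \<in> V H \<Longrightarrow> v \<in> V H \<Longrightarrow> reach H 1 u v"
  by (auto simp: reach_Suc reach_0 intro!: exI[of _ v])

lemma reach_SucI: "u \<in> V H \<Longrightarrow> {u,x} \<in> E H \<Longrightarrow> reach H n x w \<Longrightarrow> reach H (Suc n) u w"
  using reach_Suc by metis

lemma reach_SucE: assumes "reach H (Suc n) u w"
  obtains x where "u \<in> V H" "{u,x} \<in> E H" "reach H n x w"
  using assms reach_Suc by metis

lemma reach_sym: "reach H n u v \<Longrightarrow> reach H n v u"
proof (induction n arbitrary: u)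
  case 0 then show ?case by (auto simp add: reach_0)
next
  case (Suc n)
  from Suc.prems obtain x where x: "u \<in> V H" "{u,x} \<in> E H" "reach H n x v" by (rule reach_SucE)
  have xv: "x \<in> V H" using reach_in[OF x(3)] by blast
  have "{x,u} \<in> E H" using x(2) by (simp add: insert_commute)
  then have "reach H 1 x u" using xv x(1) by (rule reach_edge)
  from reach_trans[OF Suc.IH[OF x(3)] this] show ?case by simp
qed

lemma reach_prop:
  assumes "reach H n u v" "P u"
    and "\<And>a b. {a,b} \<in> E H \<Longrightarrow> a \<in> V H \<Longrightarrow> b \<in> V H \<Longrightarrow> P a \<Longrightarrow> P b"
  shows "P v"
  using assms(1,2)
proof (induction n arbitrary: u)
  case 0 then show ?case by (auto simp add: reach_0)
next
  case (Suc n)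
  from Suc.prems(1) obtain x where x: "u \<in> V H" "{u,x} \<in> E H" "reach H n x v" by (rule reach_SucE)
  have xv: "x \<in> V H" using reach_in[OF x(3)] by blast
  have "P x" using assms(3)[OF x(2) x(1) xv Suc.prems(2)] .
  then show ?case using Suc.IH x(3) by blast
qed

lemma reach_mono:
  assumes "reach H n u v" "V H \<subseteq> V H'" "E H \<subseteq> E H'"
  shows "reach H' n u v"
  using assms(1)
proof (induction n arbitrary: u)
  case 0 then show ?case using assms by (auto simp add: reach_0)
next
  case (Suc n)
  from Suc.prems(1) obtain x where x: "u \<in> V H" "{u,x} \<in> E H" "reach H n x v" by (rule reach_SucE)
  have "reach H' n x v" using Suc.IH x(3) by blast
  moreover have "u \<in> V H'" "{u,x} \<in> E H'" using x assms by auto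
  ultimately show ?case by (intro reach_SucI)
qed

lemma reach_restrict:
  assumes "reach H n u v" "u \<in> U"
    and cl: "\<And>a b. {a,b} \<in> E H \<Longrightarrow> a \<in> U \<Longrightarrow> b \<in> U"
  shows "reach (U, {e\<in>E H. e \<subseteq> U}) n u v"
  using assms(1,2)
proof (induction n arbitrary: u)
  case 0 then show ?case by (auto simp add: reach_0 V_def)
next
  case (Suc n)
  from Suc.prems(1) obtain x where x: "u \<in> V H" "{u,x} \<in> E H" "reach H n x v" by (rule reach_SucE)
  then have xU: "x \<in> U" using cl Suc.prems by blast
  have r: "reach (U, {e\<in>E H. e \<subseteq> U}) n x v" using Suc.IH x(3) xU by blast
  have "{u,x} \<in> E (U, {e\<in>E H. e \<subseteq> U})" using x xU Suc.prems by (auto simp: E_def)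
  moreover have "u \<in> V (U, {e\<in>E H. e \<subseteq> U})" using Suc.prems by (simp add: V_def)
  ultimately show ?case using r by (intro reach_SucI)
qed



lemma gdist_le: "reach G n u v \<Longrightarrow> gdist G u v \<le> enat n"
  unfolding gdist_def by (rule INF_lower2[of n]) auto

lemma gdist_attained:
  assumes "reach G n u v"
  shows "\<exists>m. reach G m u v \<and> gdist G u v = enat m"
proof -
  let ?m = "LEAST m. reach G m u v"
  have rm: "reach G ?m u v" using assms by (rule LeastI)
  have "gdist G u v \<le> enat ?m" using rm by (rule gdist_le)
  moreover have "enat ?m \<le> gdist G u v" unfolding gdist_def
    by (rule INF_greatest) (auto intro: Least_le)
  ultimately show ?thesis using rm by (intro exI[of _ ?m]) auto
qed

lemma gdist_inf: "\<not> (\<exists>n. reach G n u v) \<Longrightarrow> gdist G u v = \<infinity>"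
  unfolding gdist_def by (simp add: top_enat_def)

lemma gdist_ge_iff: "ereal a \<le> ereal_of_enat (gdist G u v) \<longleftrightarrow> (\<forall>n. reach G n u v \<longrightarrow> a \<le> real n)"
proof
  assume h: "ereal a \<le> ereal_of_enat (gdist G u v)"
  show "\<forall>n. reach G n u v \<longrightarrow> a \<le> real n"
  proof (intro allI impI)
    fix n assume "reach G n u v"
    then have "gdist G u v \<le> enat n" by (rule gdist_le)
    then have "ereal_of_enat (gdist G u v) \<le> ereal_of_enat (enat n)" by (simp only: ereal_of_enat_le_iff)
    with h have "ereal a \<le> ereal_of_enat (enat n)" by (rule order.trans)
    then show "a \<le> real n" by simp
  qed
next
  assume h: "\<forall>n. reach G n u v \<longrightarrow> a \<le> real n"
  show "ereal a \<le> ereal_of_enat (gdist G u v)"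
  proof (cases "\<exists>n. reach G n u v")
    case True
    then obtain n where "reach G n u v" by blast
    from gdist_attained[OF this] obtain m where "reach G m u v" "gdist G u v = enat m" by blast
    then show ?thesis using h by simp
  next
    case False then show ?thesis by (simp add: gdist_inf)
  qed
qed

lemma setdist_ge_iff: "ereal a \<le> setdist G A B \<longleftrightarrow> (\<forall>x\<in>A. \<forall>y\<in>B. \<forall>n. reach G n x y \<longrightarrow> a \<le> real n)"
  unfolding setdist_def le_INF_iff gdist_ge_iff by auto

lemma setdist_le_iff: "setdist G A B \<le> ereal a \<longleftrightarrow> (\<exists>x\<in>A. \<exists>y\<in>B. \<exists>n. reach G n x y \<and> real n \<le> a)"
proof
  assume h: "setdist G A B \<le> ereal a"
  show "\<exists>x\<in>A. \<exists>y\<in>B. \<exists>n. reach G n x y \<and> real n \<le> a"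
  proof (rule ccontr)
    assume c: "\<not> ?thesis"
    define b where "b = real_of_int (max 0 (\<lfloor>a\<rfloor> + 1))"
    have ab: "a < b" unfolding b_def by linarith
    have "ereal b \<le> setdist G A B" unfolding setdist_ge_iff
    proof (intro ballI allI impI)
      fix x y n assume "x \<in> A" "y \<in> B" "reach G n x y"
      then have "a < real n" using c by force
      then have "\<lfloor>a\<rfloor> < int n" by linarith
      then show "b \<le> real n" unfolding b_def by linarith
    qed
    with h have "ereal b \<le> ereal a" by (meson order.trans)
    with ab show False by simp
  qed
next
  assume "\<exists>x\<in>A. \<exists>y\<in>B. \<exists>n. reach G n x y \<and> real n \<le> a"
  then obtain x y n where "x \<in> A" "y \<in> B" "reach G n x y" "real n \<le> a" by blast
  then have "setdist G A B \<le> ereal_of_enat (gdist G x y)"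
    unfolding setdist_def by (intro INF_lower2[of "(x,y)"]) auto
  also have "\<dots> \<le> ereal_of_enat (enat n)" using gdist_le[OF \<open>reach G n x y\<close>] by (simp only: ereal_of_enat_le_iff)
  also have "\<dots> \<le> ereal a" using \<open>real n \<le> a\<close> by simp
  finally show "setdist G A B \<le> ereal a" .
qed

lemma ball_iff: "v \<in> ball G a S \<longleftrightarrow> v \<in> V G \<and> (\<exists>s\<in>S. \<exists>n. reach G n v s \<and> real n \<le> a)"
  unfolding ball_def setdist_le_iff by auto

lemma ball_sub: "ball G a S \<subseteq> V G" unfolding ball_def by auto

lemma ball_mono: "S \<subseteq> T \<Longrightarrow> a \<le> b \<Longrightarrow> ball G a S \<subseteq> ball G b T"
  unfolding subset_iff ball_iff by force

lemma ball_Un: "ball G a (S \<union> T) = ball G a S \<union> ball G a T"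
proof
  show "ball G a S \<union> ball G a T \<subseteq> ball G a (S \<union> T)" using ball_mono[of _ "S \<union> T" a a G] by blast
  show "ball G a (S \<union> T) \<subseteq> ball G a S \<union> ball G a T"
  proof
    fix v assume "v \<in> ball G a (S \<union> T)"
    then obtain s n where "v \<in> V G" "s \<in> S \<union> T" "reach G n v s" "real n \<le> a"
      using ball_iff[of v G a "S \<union> T"] by blast
    then show "v \<in> ball G a S \<union> ball G a T"
    proof (cases "s \<in> S")
      case True
      then have "v \<in> ball G a S" using ball_iff[of v G a S] \<open>v \<in> V G\<close> \<open>reach G n v s\<close> \<open>real n \<le> a\<close> by blast
      then show ?thesis by blast
    next
      case False
      then have "s \<in> T" using \<open>s \<in> S \<union> T\<close> by blast
      then have "v \<in> ball G a T" using ball_iff[of v G a T] \<open>v \<in> V G\<close> \<open>reach G n v s\<close> \<open>real n \<le> a\<close> by blast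
      then show ?thesis by blast
    qed
  qed
qed

lemma ball_empty: "ball G a {} = {}"
  by (simp add: ball_def setdist_def top_ereal_def)

lemma ball_self: "a \<ge> 0 \<Longrightarrow> S \<inter> V G \<subseteq> ball G a S"
  unfolding subset_iff ball_iff
proof (intro allI impI)
  fix t assume "0 \<le> a" "t \<in> S \<inter> V G"
  then show "t \<in> V G \<and> (\<exists>s\<in>S. \<exists>n. reach G n t s \<and> real n \<le> a)"
    by (intro conjI bexI[of _ t] exI[of _ 0]) (auto simp: reach_0)
qed

lemma ball_ball: "ball G a (ball G b S) \<subseteq> ball G (a + b) S"
proof
  fix v assume "v \<in> ball G a (ball G b S)"
  then obtain u n where "v \<in> V G" "u \<in> ball G b S" "reach G n v u" "real n \<le> a"
    using ball_iff[of v G a "ball G b S"] by blast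
  moreover then obtain s m where "s \<in> S" "reach G m u s" "real m \<le> b"
    using ball_iff[of u G b S] by blast
  ultimately have "v \<in> V G" "s \<in> S" "reach G (n + m) v s" "real (n + m) \<le> a + b"
    using reach_trans[of G n v u m s] by auto
  then show "v \<in> ball G (a + b) S" unfolding ball_iff by blast
qed

lemma setdist_sym: "setdist G A B \<ge> ereal r \<Longrightarrow> setdist G B A \<ge> ereal r"
  unfolding setdist_ge_iff
proof (intro ballI allI impI)
  fix x y n assume h: "\<forall>x\<in>A. \<forall>y\<in>B. \<forall>n. reach G n x y \<longrightarrow> r \<le> real n"
    "x \<in> B" "y \<in> A" "reach G n x y"
  from reach_sym[OF h(4)] have "reach G n y x" .
  then show "r \<le> real n" using h(1) h(2,3) by blast
qed



lemma V_del[simp]: "V (del A S) = V A - S" by (simp add: del_def V_def)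
lemma E_del[simp]: "E (del A S) = {e\<in>E A. e \<inter> S = {}}" by (simp add: del_def E_def)
lemma V_pair[simp]: "V (a, b) = a" by (simp add: V_def)
lemma E_pair[simp]: "E (a, b) = b" by (simp add: E_def)

definition edges2 :: "'a ugraph \<Rightarrow> bool" where
  "edges2 A \<longleftrightarrow> (\<forall>e\<in>E A. \<exists>a b. e = {a,b} \<and> a \<in> V A \<and> b \<in> V A)"

lemma comp_closed: "component C A \<Longrightarrow> {a,b} \<in> E A \<Longrightarrow> a \<in> V C \<Longrightarrow> b \<in> V C"
proof -
  assume "component C A" "{a,b} \<in> E A" "a \<in> V C"
  then have "\<forall>e\<in>E A. e \<inter> V C \<noteq> {} \<longrightarrow> e \<subseteq> V C" unfolding component_def by (elim conjE)
  then have "{a,b} \<inter> V C \<noteq> {} \<longrightarrow> {a,b} \<subseteq> V C" using \<open>{a,b} \<in> E A\<close> by (rule bspec)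
  moreover have "{a,b} \<inter> V C \<noteq> {}" using \<open>a \<in> V C\<close> by simp
  ultimately have "{a,b} \<subseteq> V C" by (rule mp)
  then show "b \<in> V C" by simp
qed

lemma comp_sub: "component C A \<Longrightarrow> V C \<subseteq> V A \<and> E C = {e\<in>E A. e \<subseteq> V C}"
  unfolding component_def induced_subgraph_def by (elim conjE) (intro conjI)

lemma comp_subgraph: "component C A \<Longrightarrow> subgraph C A"
  using comp_sub[of C A] unfolding subgraph_def by auto

lemma conn_ne: "connected X \<Longrightarrow> \<exists>x. x \<in> V X"
  unfolding connected_def by (elim conjE) auto

lemma subcomp:
  assumes Y: "connected Y" "subgraph Y A" and C: "component C A"
    and y0: "y0 \<in> V Y" "y0 \<in> V C"
  shows "subgraph Y C"
proof -
  have VY: "V Y \<subseteq> V C"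
  proof
    fix y assume "y \<in> V Y"
    then obtain n where rn: "reach Y n y0 y" using Y(1) y0(1) unfolding connected_def by blast
    show "y \<in> V C"
    proof (rule reach_prop[OF rn, where P="\<lambda>v. v \<in> V C"])
      show "y0 \<in> V C" by (rule y0(2))
      fix a b assume "{a,b} \<in> E Y" "a \<in> V C"
      then have "{a,b} \<in> E A" using Y(2) unfolding subgraph_def by blast
      then show "b \<in> V C" using comp_closed[OF C] \<open>a \<in> V C\<close> by blast
    qed
  qed
  have "E Y \<subseteq> E C"
  proof
    fix e assume "e \<in> E Y"
    then have "e \<subseteq> V C" "e \<in> E A" using Y(2) VY unfolding subgraph_def by blast+
    then show "e \<in> E C" using comp_sub[OF C] by blast
  qed
  then show ?thesis using VY Y(2) unfolding subgraph_def by blast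
qed

lemma comp_eq:
  assumes "component C1 A" "component C2 A" "x \<in> V C1" "x \<in> V C2"
  shows "C1 = C2"
proof -
  have "subgraph C2 C1"
    using subcomp[OF _ comp_subgraph[OF assms(2)] assms(1) assms(4,3)] assms(2)
    unfolding component_def by blast
  moreover have "subgraph C1 C2"
    using subcomp[OF _ comp_subgraph[OF assms(1)] assms(2) assms(3,4)] assms(1)
    unfolding component_def by blast
  ultimately have "V C1 = V C2" "E C1 = E C2" unfolding subgraph_def by blast+
  then show ?thesis unfolding V_def E_def by (simp add: prod_eq_iff)
qed

lemma comp_disj:
  assumes "component C1 A" "component C2 A" "C1 \<noteq> C2"
  shows "V C1 \<inter> V C2 = {}"
  using comp_eq[OF assms(1,2)] assms(3) by blast

definition comp_of :: "'a ugraph \<Rightarrow> 'a \<Rightarrow> 'a ugraph" where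
  "comp_of A v = ({u. \<exists>n. reach A n v u}, {e\<in>E A. e \<subseteq> {u. \<exists>n. reach A n v u}})"

lemma comp_of:
  assumes A: "edges2 A" and v: "v \<in> V A"
  shows "component (comp_of A v) A" "v \<in> V (comp_of A v)"
proof -
  define R where "R = {u. \<exists>n. reach A n v u}"
  have co: "comp_of A v = (R, {e\<in>E A. e \<subseteq> R})" unfolding comp_of_def R_def by simp
  have vR: "v \<in> R" unfolding R_def using v by (auto simp: reach_0 intro!: exI[of _ 0])
  have cl: "b \<in> R" if h: "{a,b} \<in> E A" "a \<in> R" for a b
  proof -
    obtain n where rn: "reach A n v a" using h(2) unfolding R_def by blast
    obtain a' b' where ab: "{a,b} = {a',b'}" "a' \<in> V A" "b' \<in> V A" using A h(1) unfolding edges2_def by blast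
    then have "a \<in> V A" "b \<in> V A" by (metis insert_iff singletonD)+
    then have "reach A 1 a b" using h(1) by (rule_tac reach_edge) auto
    from reach_trans[OF rn this] show "b \<in> R" unfolding R_def by blast
  qed
  have RV: "R \<subseteq> V A" unfolding R_def using reach_in by fast
  show "v \<in> V (comp_of A v)" using vR co by simp
  show "component (comp_of A v) A" unfolding component_def induced_subgraph_def co
  proof (intro conjI ballI impI)
    show "V (R, {e \<in> E A. e \<subseteq> R}) \<subseteq> V A" using RV by simp
    show "E (R, {e \<in> E A. e \<subseteq> R}) = {e \<in> E A. e \<subseteq> V (R, {e \<in> E A. e \<subseteq> R})}" by simp
    show "connected (R, {e \<in> E A. e \<subseteq> R})" unfolding connected_def
    proof (intro conjI ballI)
      show "V (R, {e \<in> E A. e \<subseteq> R}) \<noteq> {}" using vR by auto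
      fix x y assume "x \<in> V (R, {e \<in> E A. e \<subseteq> R})" "y \<in> V (R, {e \<in> E A. e \<subseteq> R})"
      then obtain n m where "reach A n v x" "reach A m v y" unfolding R_def by auto
      from reach_trans[OF reach_sym[OF this(1)] this(2)] have "reach A (n + m) x y" .
      have "x \<in> R" using \<open>x \<in> V (R, {e \<in> E A. e \<subseteq> R})\<close> by simp
      have "reach (R, {e \<in> E A. e \<subseteq> R}) (n + m) x y"
      proof (rule reach_restrict[where U=R])
        show "reach A (n + m) x y" by fact
        show "x \<in> R" by fact
        fix a b assume "{a,b} \<in> E A" "a \<in> R" then show "b \<in> R" by (rule cl)
      qed
      then show "\<exists>n. reach (R, {e \<in> E A. e \<subseteq> R}) n x y" by blast
    qed
    fix e assume e: "e \<in> E A" "e \<inter> V (R, {e \<in> E A. e \<subseteq> R}) \<noteq> {}"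
    obtain a b where ab: "e = {a,b}" using A e(1) unfolding edges2_def by blast
    have "{b,a} \<in> E A" using e(1) ab by (simp add: insert_commute)
    have "a \<in> R \<or> b \<in> R" using e(2) ab by auto
    then have "a \<in> R \<and> b \<in> R" using cl[of a b] cl[of b a] e(1) ab \<open>{b,a} \<in> E A\<close> by blast
    then show "e \<subseteq> V (R, {e \<in> E A. e \<subseteq> R})" using ab by simp
  qed
qed

lemma side_one:
  assumes sep: "separation C A B" and X: "connected X" "subgraph X C"
    and avoid: "V X \<inter> (V A \<inter> V B) = {}" and x0: "x0 \<in> V X" "x0 \<in> V A"
    and ne: "\<forall>e\<in>E C. e \<noteq> {}"
  shows "subgraph X A"
proof -
  have sA: "subgraph A C" and sB: "subgraph B C" and EC: "E A \<union> E B = E C"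
    using sep unfolding separation_def by blast+
  have VX: "V X \<subseteq> V A - V B"
  proof
    fix y assume "y \<in> V X"
    then obtain n where rn: "reach X n x0 y" using X(1) x0(1) unfolding connected_def by blast
    show "y \<in> V A - V B"
    proof (rule reach_prop[OF rn, where P="\<lambda>v. v \<in> V A - V B"])
      show "x0 \<in> V A - V B" using x0 avoid by blast
      fix a b assume ab: "{a,b} \<in> E X" "b \<in> V X" "a \<in> V A - V B"
      then have "{a,b} \<in> E C" using X(2) unfolding subgraph_def by blast
      then have "{a,b} \<in> E A \<or> {a,b} \<in> E B" using EC by blast
      moreover have "{a,b} \<notin> E B" using ab(3) sB unfolding subgraph_def by blast
      ultimately have "{a,b} \<in> E A" by blast
      then have "b \<in> V A" using sA unfolding subgraph_def by blast
      then show "b \<in> V A - V B" using ab(2) avoid by blast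
    qed
  qed
  have "E X \<subseteq> E A"
  proof
    fix e assume e: "e \<in> E X"
    then have eC: "e \<in> E C" and eX: "e \<subseteq> V X" using X(2) unfolding subgraph_def by blast+
    have "e \<noteq> {}" using ne eC by blast
    then have "e \<notin> E B" using eX VX sB unfolding subgraph_def by blast
    then show "e \<in> E A" using EC eC by blast
  qed
  then show ?thesis using VX X(2) unfolding subgraph_def by blast
qed

lemma separation_sym: "separation C A B \<Longrightarrow> separation C B A"
  unfolding separation_def by blast

lemma side:
  assumes sep: "separation C A B" and X: "connected X" "subgraph X C"
    and avoid: "V X \<inter> (V A \<inter> V B) = {}"
    and ne: "\<forall>e\<in>E C. e \<noteq> {}"
  shows "subgraph X A \<or> subgraph X B"
proof -
  obtain x0 where x0: "x0 \<in> V X" using conn_ne[OF X(1)] by blast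
  then have "x0 \<in> V C" using X(2) unfolding subgraph_def by blast
  then have "x0 \<in> V A \<or> x0 \<in> V B" using sep unfolding separation_def by blast
  then show ?thesis
  proof
    assume "x0 \<in> V A" then show ?thesis using side_one[OF sep X avoid x0 _ ne] by blast
  next
    assume "x0 \<in> V B"
    moreover have "V X \<inter> (V B \<inter> V A) = {}" using avoid by blast
    ultimately show ?thesis using side_one[OF separation_sym[OF sep] X _ x0 _ ne] by blast
  qed
qed

lemma subgraph_del: "subgraph X A \<Longrightarrow> V X \<inter> S = {} \<Longrightarrow> subgraph X (del A S)"
  unfolding subgraph_def by fastforce

lemma subgraph_delD: "subgraph X (del A S) \<Longrightarrow> subgraph X A \<and> V X \<inter> S = {}"
  unfolding subgraph_def by auto



locale setting =
  fixes G L :: "'a ugraph" and F :: "'a ugraph set" and Z :: "'a set"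
    and r r' :: real and \<theta> k :: nat
  assumes G: "finite_graph G" and L: "induced_subgraph L G"
    and F: "\<forall>X\<in>F. subgraph X L \<and> connected X"
    and rr: "r \<le> 2 * r'" and r'0: "r' \<ge> 0"
    and Zsub: "Z \<subseteq> V G" and NZ: "nbhd G (V L) \<subseteq> Z"
    and nopack: "\<not> (\<exists>S\<subseteq>F. finite S \<and> card S = k \<and>
                    (\<forall>X\<in>S. \<forall>Y\<in>S. X \<noteq> Y \<longrightarrow> setdist G (V X) (V Y) \<ge> ereal r))"
begin

lemma VL: "V L \<subseteq> V G" using L unfolding induced_subgraph_def by (elim conjE)
lemma EL: "E L = {e\<in>E G. e \<subseteq> V L}" using L unfolding induced_subgraph_def by (elim conjE)

lemma Gedge: "e \<in> E G \<Longrightarrow> \<exists>a b. e = {a,b} \<and> a \<noteq> b \<and> a \<in> V G \<and> b \<in> V G"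
  using G unfolding finite_graph_def by (elim conjE) (rule bspec)

lemma finVG: "finite (V G)" using G unfolding finite_graph_def by (elim conjE)

lemma finEG: "finite (E G)"
proof -
  have "E G \<subseteq> Pow (V G)"
  proof
    fix e assume "e \<in> E G"
    from Gedge[OF this] show "e \<in> Pow (V G)" by auto
  qed
  then show ?thesis using finVG by (meson finite_Pow_iff finite_subset)
qed

lemma finVL: "finite (V L)" using finVG VL by (rule finite_subset[rotated])

lemma edge_ne: "e \<in> E L \<Longrightarrow> e \<noteq> {}"
  using Gedge[of e] EL by auto

lemma edges2_del: "edges2 (del L S)"
  unfolding edges2_def
proof
  fix e assume "e \<in> E (del L S)"
  then have e: "e \<in> E G" "e \<subseteq> V L" "e \<inter> S = {}" using EL by auto
  obtain a b where "e = {a,b}" using Gedge[OF e(1)] by blast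
  then show "\<exists>a b. e = {a, b} \<and> a \<in> V (del L S) \<and> b \<in> V (del L S)" using e by auto
qed

lemma nbhd_intro:
  assumes "{x,y} \<in> E G" "x \<in> V L" "y \<notin> V L"
  shows "y \<in> nbhd G (V L)"
proof -
  obtain a b where ab: "{x,y} = {a,b}" "a \<in> V G" "b \<in> V G" using Gedge[OF assms(1)] by blast
  then have yV: "y \<in> V G" by (metis insert_iff singletonD)
  have xV: "x \<in> V G" using assms(2) VL by blast
  have "{y,x} \<in> E G" using assms(1) by (simp add: insert_commute)
  then have "reach G 1 y x" using yV xV by (rule reach_edge)
  then have "y \<in> ball G 1 (V L)" unfolding ball_iff using yV assms(2) by force
  then show ?thesis unfolding nbhd_def using assms(3) by blast
qed

lemma exitL:
  assumes NZc: "nbhd G (V L) \<subseteq> Zc" and C: "component C (del L Zc)"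
  shows "x \<in> V C \<Longrightarrow> reach G n x y \<Longrightarrow> y \<notin> V C \<Longrightarrow>
     \<exists>w\<in>Zc. \<exists>m\<le>n. reach G m x w \<and> reach G (n - m) w y"
proof (induction n arbitrary: x)
  case 0 then show ?case by (auto simp: reach_0)
next
  case (Suc n)
  from Suc.prems(2) obtain x' where x': "x \<in> V G" "{x,x'} \<in> E G" "reach G n x' y" by (rule reach_SucE)
  have x'V: "x' \<in> V G" using reach_in[OF x'(3)] by blast
  have xC: "x \<in> V L" "x \<notin> Zc" using comp_sub[OF C] Suc.prems(1) by auto
  show ?case
  proof (cases "x' \<in> Zc")
    case True
    have "reach G 1 x x'" using x'(2) x'(1) x'V by (rule reach_edge)
    then show ?thesis using True x'(3) by (intro bexI[of _ x'] exI[of _ 1]) auto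
  next
    case False
    have "x' \<in> V L"
    proof (rule ccontr)
      assume "x' \<notin> V L"
      then have "x' \<in> nbhd G (V L)" using nbhd_intro[OF x'(2) xC(1)] by blast
      then show False using NZc False by blast
    qed
    then have "{x,x'} \<in> E (del L Zc)" using x'(2) xC EL False by auto
    then have "x' \<in> V C" using comp_closed[OF C] Suc.prems(1) by blast
    from Suc.IH[OF this x'(3) Suc.prems(3)] obtain w m where
      w: "w \<in> Zc" "m \<le> n" "reach G m x' w" "reach G (n - m) w y" by blast
    have "reach G (Suc m) x w" using x'(1,2) w(3) by (rule reach_SucI)
    then show ?thesis using w by (intro bexI[of _ w] exI[of _ "Suc m"]) auto
  qed
qed

lemma far:
  assumes NZc: "nbhd G (V L) \<subseteq> Zc" and C: "component C (del L Zc)"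
    and x: "x \<in> V C" "x \<notin> ball G r' Zc" and y: "y \<notin> V C" "y \<notin> ball G r' Zc"
    and rn: "reach G n x y"
  shows "r \<le> real n"
proof -
  obtain w m where w: "w \<in> Zc" "m \<le> n" "reach G m x w" "reach G (n - m) w y"
    using exitL[OF NZc C x(1) rn y(1)] by blast
  have xV: "x \<in> V G" "y \<in> V G" using reach_in[OF rn] by auto
  have "\<not> real m \<le> r'" using x(2) w(1,3) xV unfolding ball_iff by blast
  moreover have "\<not> real (n - m) \<le> r'" using y(2) w(1) reach_sym[OF w(4)] xV unfolding ball_iff by blast
  ultimately show ?thesis using rr w(2) by linarith
qed

lemma far_setdist:
  assumes NZc: "nbhd G (V L) \<subseteq> Zc" and C: "component C (del L Zc)"
    and X: "V X \<subseteq> V C" "V X \<inter> ball G r' Zc = {}"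
    and Y: "V Y \<inter> V C = {}" "V Y \<inter> ball G r' Zc = {}"
  shows "ereal r \<le> setdist G (V X) (V Y)"
  unfolding setdist_ge_iff
proof (intro ballI allI impI)
  fix x y n assume "x \<in> V X" "y \<in> V Y" "reach G n x y"
  then show "r \<le> real n" using far[OF NZc C, of x y n] X Y by blast
qed

lemma ball_outside:
  assumes NZc: "nbhd G (V L) \<subseteq> Zc" and C: "component C (del L Zc)"
    and T: "T \<inter> V C = {}"
  shows "ball G r' T \<inter> V C \<subseteq> ball G r' Zc"
proof
  fix v assume v: "v \<in> ball G r' T \<inter> V C"
  then obtain s n where s: "v \<in> V G" "s \<in> T" "reach G n v s" "real n \<le> r'"
    using ball_iff[of v G r' T] by blast
  have "s \<notin> V C" using s(2) T by blast
  then obtain w m where w: "w \<in> Zc" "m \<le> n" "reach G m v w"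
    using exitL[OF NZc C _ s(3)] v by blast
  have "real m \<le> r'" using w(2) s(4) by linarith
  then show "v \<in> ball G r' Zc" unfolding ball_iff using s(1) w by blast
qed

lemma comp_unch:
  assumes C: "component C (del L Zc)" and S: "V C \<inter> S = {}"
  shows "component C (del L (Zc \<union> S))"
proof -
  have c: "V C \<subseteq> V L - Zc" "E C = {e\<in>E L. e \<inter> Zc = {} \<and> e \<subseteq> V C}" "connected C"
    "\<forall>e\<in>E (del L Zc). e \<inter> V C \<noteq> {} \<longrightarrow> e \<subseteq> V C"
    using C unfolding component_def induced_subgraph_def by auto
  have "E C = {e\<in>E (del L (Zc \<union> S)). e \<subseteq> V C}" using c(2) S by auto
  moreover have "V C \<subseteq> V (del L (Zc \<union> S))" using c(1) S by auto
  moreover have "\<forall>e\<in>E (del L (Zc \<union> S)). e \<inter> V C \<noteq> {} \<longrightarrow> e \<subseteq> V C" using c(4) by auto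
  ultimately show ?thesis using c(3) unfolding component_def induced_subgraph_def by (intro conjI)
qed

lemma comp_sub_del:
  assumes "component C (del L Z2)" "Z1 \<subseteq> Z2"
  shows "subgraph C (del L Z1)"
  using comp_subgraph[OF assms(1)] assms(2) unfolding subgraph_def by auto

lemma member_sub: "X \<in> F \<Longrightarrow> V X \<inter> Zc = {} \<Longrightarrow> subgraph X (del L Zc)"
  using F subgraph_del by blast

lemma member_comp:
  assumes "X \<in> F" "V X \<inter> Zc = {}"
  shows "\<exists>C. component C (del L Zc) \<and> subgraph X C"
proof -
  have X: "connected X" "subgraph X (del L Zc)" using F assms member_sub by auto
  obtain x where x: "x \<in> V X" using conn_ne[OF X(1)] by blast
  then have "x \<in> V (del L Zc)" using X(2) unfolding subgraph_def by blast
  from comp_of[OF edges2_del this] have "component (comp_of (del L Zc) x) (del L Zc)"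
    "x \<in> V (comp_of (del L Zc) x)" by auto
  then show ?thesis using subcomp[OF X _ x] by blast
qed

end



context setting begin

definition Zc :: "'a set \<Rightarrow> 'a set" where "Zc S = ball G r' Z \<union> S"
definition goodm :: "'a set \<Rightarrow> 'a ugraph \<Rightarrow> bool" where
  "goodm W X \<longleftrightarrow> X \<in> F \<and> V X \<inter> ball G r' W = {}"
definition goodc :: "'a set \<Rightarrow> 'a ugraph \<Rightarrow> bool" where
  "goodc W C \<longleftrightarrow> component C (del L W) \<and> (\<exists>X. goodm W X \<and> subgraph X C)"
definition gcs :: "'a set \<Rightarrow> 'a ugraph set" where "gcs W = {C. goodc W C}"

definition Inv :: "'a set \<Rightarrow> 'a ugraph set \<Rightarrow> bool" where
  "Inv S K \<longleftrightarrow> S \<subseteq> V L \<and> K \<subseteq> F \<and> (\<forall>X\<in>K. V X \<inter> ball G r' (Zc S) \<noteq> {}) \<and>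
     (\<forall>X\<in>K. \<forall>Y\<in>K. X \<noteq> Y \<longrightarrow> ereal r \<le> setdist G (V X) (V Y)) \<and>
     (\<forall>X\<in>K. \<forall>Y. goodm (Zc S) Y \<longrightarrow> ereal r \<le> setdist G (V X) (V Y)) \<and>
     (S = {} \<or> card S + (\<theta> - 1) \<le> (\<theta> - 1) * (card (gcs (Zc S)) + 4 * card K))"

lemma Zc_sub: "S \<subseteq> V L \<Longrightarrow> Zc S \<subseteq> V G"
  unfolding Zc_def using ball_sub[of G r' Z] VL by (rule_tac Un_least) auto

lemma Z_ball: "Z \<subseteq> ball G r' Z" using ball_self[OF r'0, of Z G] Zsub by (simp add: Int_absorb2)

lemma NZc: "nbhd G (V L) \<subseteq> Zc S"
  unfolding Zc_def using NZ Z_ball by (meson le_supI1 order_trans)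

lemma Zc_ball: "S \<subseteq> V L \<Longrightarrow> Zc S \<subseteq> ball G r' (Zc S)"
  using ball_self[OF r'0, of "Zc S" G] Zc_sub[of S] by (simp add: Int_absorb2)

lemma Zc_Un: "Zc (S \<union> T) = Zc S \<union> T" unfolding Zc_def by (simp add: Un_assoc)

lemma fin_sub: "finite {C :: 'a ugraph. V C \<subseteq> V G \<and> E C \<subseteq> E G}"
proof -
  have "{C :: 'a ugraph. V C \<subseteq> V G \<and> E C \<subseteq> E G} \<subseteq> Pow (V G) \<times> Pow (E G)"
  proof
    fix C :: "'a ugraph" assume "C \<in> {C. V C \<subseteq> V G \<and> E C \<subseteq> E G}"
    then have "V C \<in> Pow (V G)" "E C \<in> Pow (E G)" by auto
    moreover have "C = (V C, E C)" unfolding V_def E_def by simp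
    ultimately show "C \<in> Pow (V G) \<times> Pow (E G)" by (metis mem_Sigma_iff)
  qed
  then show ?thesis using finVG finEG by (meson finite_Pow_iff finite_SigmaI finite_subset)
qed

lemma finF: "finite F"
proof -
  have "F \<subseteq> {C :: 'a ugraph. V C \<subseteq> V G \<and> E C \<subseteq> E G}"
  proof
    fix X assume "X \<in> F"
    then have "subgraph X L" using F by blast
    then have "V X \<subseteq> V L" "E X \<subseteq> E L" unfolding subgraph_def by auto
    then show "X \<in> {C :: 'a ugraph. V C \<subseteq> V G \<and> E C \<subseteq> E G}" using VL EL by auto
  qed
  then show ?thesis using fin_sub by (rule finite_subset)
qed

lemma fin_gcs: "finite (gcs W)"
proof -
  have "gcs W \<subseteq> {C :: 'a ugraph. V C \<subseteq> V G \<and> E C \<subseteq> E G}"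
  proof
    fix C assume "C \<in> gcs W"
    then have "component C (del L W)" unfolding gcs_def goodc_def by blast
    then have "V C \<subseteq> V L" "E C \<subseteq> E L" using comp_sub[of C "del L W"] by auto
    then show "C \<in> {C :: 'a ugraph. V C \<subseteq> V G \<and> E C \<subseteq> E G}" using VL EL by auto
  qed
  then show ?thesis using fin_sub by (rule finite_subset)
qed

lemma goodm_mono: "goodm W' X \<Longrightarrow> W \<subseteq> W' \<Longrightarrow> goodm W X"
  unfolding goodm_def using ball_mono[of W W' r' r' G] by auto

lemma packing:
  assumes I: "Inv S K"
  shows "card (gcs (Zc S)) + card K < k"
proof -
  let ?W = "Zc S"
  let ?Gs = "gcs ?W"
  define rep where "rep C = (SOME X. goodm ?W X \<and> subgraph X C)" for C
  have rep: "goodm ?W (rep C) \<and> subgraph (rep C) C" if "C \<in> ?Gs" for C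
  proof -
    have "\<exists>X. goodm ?W X \<and> subgraph X C" using that unfolding gcs_def goodc_def by blast
    then show ?thesis unfolding rep_def by (rule someI_ex)
  qed
  have comp: "component C (del L ?W)" if "C \<in> ?Gs" for C
    using that unfolding gcs_def goodc_def by blast
  have SL: "S \<subseteq> V L" and KF: "K \<subseteq> F" and Kb: "\<forall>X\<in>K. V X \<inter> ball G r' ?W \<noteq> {}"
    and KK: "\<forall>X\<in>K. \<forall>Y\<in>K. X \<noteq> Y \<longrightarrow> ereal r \<le> setdist G (V X) (V Y)"
    and KG: "\<forall>X\<in>K. \<forall>Y. goodm ?W Y \<longrightarrow> ereal r \<le> setdist G (V X) (V Y)"
    using I unfolding Inv_def by blast+
  have inj: "inj_on rep ?Gs"
  proof (rule inj_onI)
    fix C1 C2 assume c: "C1 \<in> ?Gs" "C2 \<in> ?Gs" "rep C1 = rep C2"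
    have "connected (rep C1)" using rep[OF c(1)] F unfolding goodm_def by blast
    then obtain x where x: "x \<in> V (rep C1)" using conn_ne by blast
    have "x \<in> V C1" using x rep[OF c(1)] unfolding subgraph_def by blast
    moreover have "x \<in> V C2" using x c(3) rep[OF c(2)] unfolding subgraph_def by auto
    ultimately show "C1 = C2" using comp_eq[OF comp[OF c(1)] comp[OF c(2)]] by blast
  qed
  define R where "R = rep ` ?Gs"
  have cR: "card R = card ?Gs" unfolding R_def using inj by (rule card_image)
  have Rg: "goodm ?W X" if "X \<in> R" for X
  proof -
    obtain C where "C \<in> ?Gs" "X = rep C" using \<open>X \<in> R\<close> unfolding R_def by blast
    then show ?thesis using rep by simp
  qed
  have RF: "R \<subseteq> F" using Rg unfolding goodm_def by blast
  have RK: "R \<inter> K = {}"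
  proof (rule ccontr)
    assume "R \<inter> K \<noteq> {}"
    then obtain X where "X \<in> R" "X \<in> K" by blast
    then show False using Rg[of X] Kb unfolding goodm_def by blast
  qed
  define P where "P = R \<union> K"
  have finP: "finite P" unfolding P_def using RF KF finF by (meson finite_Un finite_subset)
  have cP: "card P = card ?Gs + card K"
    unfolding P_def using card_Un_disjoint[OF _ _ RK] cR finP unfolding P_def by auto
  have PF: "P \<subseteq> F" unfolding P_def using RF KF by blast
  have pw: "ereal r \<le> setdist G (V X) (V Y)" if "X \<in> P" "Y \<in> P" "X \<noteq> Y" for X Y
  proof -
    { assume "X \<in> R" "Y \<in> R"
      then obtain C1 C2 where c: "C1 \<in> ?Gs" "C2 \<in> ?Gs" "X = rep C1" "Y = rep C2" unfolding R_def by blast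
      then have "C1 \<noteq> C2" using that(3) by blast
      then have d: "V C1 \<inter> V C2 = {}" using comp_disj[OF comp[OF c(1)] comp[OF c(2)]] by blast
      have "V X \<subseteq> V C1" "V Y \<subseteq> V C2" using rep[OF c(1)] rep[OF c(2)] c(3,4) unfolding subgraph_def by auto
      moreover have "V X \<inter> ball G r' ?W = {}" "V Y \<inter> ball G r' ?W = {}"
        using rep[OF c(1)] rep[OF c(2)] c(3,4) unfolding goodm_def by auto
      ultimately have ?thesis using far_setdist[OF NZc comp[OF c(1)], of X Y] d by blast }
    moreover
    { assume "X \<in> K" "Y \<in> R"
      then have ?thesis using KG Rg[of Y] by blast }
    moreover
    { assume "X \<in> R" "Y \<in> K"
      then have "ereal r \<le> setdist G (V Y) (V X)" using KG Rg[of X] by blast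
      then have ?thesis by (rule setdist_sym) }
    moreover
    { assume "X \<in> K" "Y \<in> K"
      then have ?thesis using KK that(3) by blast }
    ultimately show ?thesis using that(1,2) unfolding P_def by blast
  qed
  show ?thesis
  proof (rule ccontr)
    assume "\<not> ?thesis"
    then have "k \<le> card P" using cP by linarith
    then obtain P' where P': "P' \<subseteq> P" "card P' = k" by (meson obtain_subset_with_card_n)
    have "finite P'" using P'(1) finP by (rule finite_subset)
    have "\<forall>X\<in>P'. \<forall>Y\<in>P'. X \<noteq> Y \<longrightarrow> setdist G (V X) (V Y) \<ge> ereal r"
      using pw P'(1) by blast
    moreover have "P' \<subseteq> F" using P'(1) PF by blast
    ultimately have "\<exists>S\<subseteq>F. finite S \<and> card S = k \<and>
                    (\<forall>X\<in>S. \<forall>Y\<in>S. X \<noteq> Y \<longrightarrow> setdist G (V X) (V Y) \<ge> ereal r)"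
      using \<open>finite P'\<close> P'(2) by blast
    then show False by (rule notE[OF nopack])
  qed
qed

end



lemma arith_kill:
  fixes cS cS' t g g' kk :: nat
  assumes "cS = 0 \<or> cS + t \<le> t * (g + 4 * kk)" "cS' \<le> cS + 3 * t" "g \<le> g' + 1"
  shows "cS' + t \<le> t * (g' + 4 * (kk + 1))"
proof -
  have m: "t * g \<le> t * (g' + 1)" using assms(3) by (rule mult_le_mono2)
  from assms(1) show ?thesis
  proof
    assume "cS = 0"
    then show ?thesis using assms(2) by (simp add: algebra_simps)
  next
    assume "cS + t \<le> t * (g + 4 * kk)"
    then show ?thesis using assms(2) m by (simp add: algebra_simps)
  qed
qed

lemma arith_split:
  fixes cS cS' t g g' kk :: nat
  assumes "cS = 0 \<or> cS + t \<le> t * (g + 4 * kk)" "cS' \<le> cS + t" "g + 1 \<le> g'" "1 \<le> g"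
  shows "cS' + t \<le> t * (g' + 4 * kk)"
proof -
  have m: "t * (g + 1) \<le> t * g'" using assms(3) by (rule mult_le_mono2)
  have m2: "t * 2 \<le> t * g'" using assms(3,4) by (intro mult_le_mono2) linarith
  from assms(1) show ?thesis
  proof
    assume "cS = 0"
    have "t * g' \<le> t * (g' + 4 * kk)" by simp
    then show ?thesis using assms(2) m2 \<open>cS = 0\<close> by linarith
  next
    assume "cS + t \<le> t * (g + 4 * kk)"
    then show ?thesis using assms(2) m by (simp add: algebra_simps)
  qed
qed

context setting begin

lemma gcs_comp: "C \<in> gcs W \<Longrightarrow> component C (del L W)"
  unfolding gcs_def goodc_def by simp

lemma gcs_good: "C \<in> gcs W \<Longrightarrow> \<exists>X. goodm W X \<and> subgraph X C"
  unfolding gcs_def goodc_def by simp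

lemma gcs_keep:
  assumes SL: "S \<subseteq> V L" and C: "C \<in> gcs (Zc S)" and Sep: "Sep \<subseteq> V C"
  shows "gcs (Zc S) - {C} \<subseteq> gcs (Zc S \<union> Sep)"
proof
  fix C'' assume a: "C'' \<in> gcs (Zc S) - {C}"
  have c'': "component C'' (del L (Zc S))" using a gcs_comp by blast
  have cc: "component C (del L (Zc S))" using C gcs_comp by blast
  have d: "V C'' \<inter> V C = {}" using comp_disj[OF c'' cc] a by blast
  then have d2: "V C'' \<inter> Sep = {}" using Sep by blast
  have comp': "component C'' (del L (Zc S \<union> Sep))" using comp_unch[OF c'' d2] .
  obtain Y where Y: "goodm (Zc S) Y" "subgraph Y C''" using gcs_good a by blast
  have VY: "V Y \<subseteq> V C''" using Y(2) unfolding subgraph_def by blast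
  have "ball G r' Sep \<inter> V C'' \<subseteq> ball G r' (Zc S)"
    using ball_outside[OF NZc c''] d2 by blast
  then have "V Y \<inter> ball G r' (Zc S \<union> Sep) = {}"
    using Y(1) VY unfolding goodm_def ball_Un by blast
  then have "goodm (Zc S \<union> Sep) Y" using Y(1) unfolding goodm_def by blast
  then show "C'' \<in> gcs (Zc S \<union> Sep)" using comp' Y(2) unfolding gcs_def goodc_def by blast
qed

lemma card_gcs_keep:
  assumes SL: "S \<subseteq> V L" and C: "C \<in> gcs (Zc S)" and Sep: "Sep \<subseteq> V C"
  shows "card (gcs (Zc S)) \<le> card (gcs (Zc S \<union> Sep)) + 1"
proof -
  have "card (gcs (Zc S) - {C}) \<le> card (gcs (Zc S \<union> Sep))"
    using gcs_keep[OF assms] fin_gcs by (rule card_mono[rotated])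
  moreover have "card (gcs (Zc S) - {C}) = card (gcs (Zc S)) - 1" using C fin_gcs by simp
  ultimately show ?thesis by linarith
qed

lemma gcs_pos: "C \<in> gcs W \<Longrightarrow> 1 \<le> card (gcs W)"
  using fin_gcs[of W] by (metis One_nat_def Suc_leI card_gt_0_iff empty_iff)

lemma kill_step:
  assumes I: "Inv S K" and C: "C \<in> gcs (Zc S)" and Sep: "Sep \<subseteq> V C"
    and cS: "card Sep \<le> 3 * (\<theta> - 1)"
    and kp: "\<forall>X. goodm (Zc S) X \<and> subgraph X C \<longrightarrow> V X \<inter> ball G r' Sep \<noteq> {}"
  shows "\<exists>K'. Inv (S \<union> Sep) K' \<and> Sep \<noteq> {}"
proof -
  let ?W = "Zc S"
  let ?W' = "Zc S \<union> Sep"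
  have SL: "S \<subseteq> V L" and KF: "K \<subseteq> F" and Kb: "\<forall>X\<in>K. V X \<inter> ball G r' ?W \<noteq> {}"
    and KK: "\<forall>X\<in>K. \<forall>Y\<in>K. X \<noteq> Y \<longrightarrow> ereal r \<le> setdist G (V X) (V Y)"
    and KG: "\<forall>X\<in>K. \<forall>Y. goodm ?W Y \<longrightarrow> ereal r \<le> setdist G (V X) (V Y)"
    and cost: "S = {} \<or> card S + (\<theta> - 1) \<le> (\<theta> - 1) * (card (gcs ?W) + 4 * card K)"
    using I unfolding Inv_def by blast+
  have Cc: "component C (del L ?W)" using C gcs_comp by blast
  have VC: "V C \<subseteq> V L" "V C \<inter> ?W = {}" using comp_sub[OF Cc] by auto
  obtain X0 where X0: "goodm ?W X0" "subgraph X0 C" using gcs_good[OF C] by blast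
  have X0b: "V X0 \<inter> ball G r' Sep \<noteq> {}" using kp X0 by blast
  then have Sne: "Sep \<noteq> {}" using ball_empty by fastforce
  have SepL: "S \<union> Sep \<subseteq> V L" using SL Sep VC by blast
  have W': "Zc (S \<union> Sep) = ?W'" by (rule Zc_Un)
  have bW: "ball G r' ?W \<subseteq> ball G r' ?W'" by (rule ball_mono) auto
  have bS: "ball G r' Sep \<subseteq> ball G r' ?W'" by (rule ball_mono) auto
  have X0K: "X0 \<notin> K" using Kb X0(1) unfolding goodm_def by blast
  have finK: "finite K" using KF finF by (rule finite_subset)
  define K' where "K' = insert X0 K"
  have cK': "card K' = card K + 1" unfolding K'_def using X0K finK by simp
  have X0F: "X0 \<in> F" using X0(1) unfolding goodm_def by blast
  have VX0: "V X0 \<subseteq> V C" "V X0 \<inter> ball G r' ?W = {}" using X0 unfolding subgraph_def goodm_def by auto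
  have farX0: "ereal r \<le> setdist G (V X0) (V Y)" if Y: "goodm ?W' Y" for Y
  proof -
    have YF: "Y \<in> F" and Yb: "V Y \<inter> ball G r' ?W' = {}" using Y unfolding goodm_def by auto
    have "?W' \<subseteq> ball G r' ?W'" using Zc_ball[OF SepL] W' by simp
    then have "V Y \<inter> ?W = {}" using Yb by blast
    from member_comp[OF YF this] obtain CY where CY: "component CY (del L ?W)" "subgraph Y CY" by blast
    have YW: "goodm ?W Y" using goodm_mono[OF Y] by blast
    have "CY \<noteq> C"
    proof
      assume "CY = C"
      then have "V Y \<inter> ball G r' Sep \<noteq> {}" using kp YW CY(2) by blast
      then show False using Yb bS by blast
    qed
    then have "V CY \<inter> V C = {}" using comp_disj[OF CY(1) Cc] by blast
    moreover have "V Y \<subseteq> V CY" using CY(2) unfolding subgraph_def by blast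
    ultimately have "V Y \<inter> V C = {}" by blast
    moreover have "V Y \<inter> ball G r' ?W = {}" using YW unfolding goodm_def by blast
    ultimately show ?thesis using far_setdist[OF NZc Cc VX0] by blast
  qed
  have "Inv (S \<union> Sep) K'"
    unfolding Inv_def W'
  proof (intro conjI)
    show "S \<union> Sep \<subseteq> V L" by (rule SepL)
    show "K' \<subseteq> F" unfolding K'_def using KF X0F by blast
    show "\<forall>X\<in>K'. V X \<inter> ball G r' ?W' \<noteq> {}" unfolding K'_def using Kb bW X0b bS by blast
    show "\<forall>X\<in>K'. \<forall>Y\<in>K'. X \<noteq> Y \<longrightarrow> ereal r \<le> setdist G (V X) (V Y)"
    proof (intro ballI impI)
      fix X Y assume XY: "X \<in> K'" "Y \<in> K'" "X \<noteq> Y"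
      show "ereal r \<le> setdist G (V X) (V Y)"
      proof (cases "X = X0")
        case True
        then have "Y \<in> K" using XY unfolding K'_def by blast
        then have "ereal r \<le> setdist G (V Y) (V X0)" using KG X0(1) by blast
        then show ?thesis using True by (simp add: setdist_sym)
      next
        case False
        then have XK: "X \<in> K" using XY unfolding K'_def by blast
        show ?thesis
        proof (cases "Y = X0")
          case True
          then show ?thesis using KG XK X0(1) by blast
        next
          case False
          then have "Y \<in> K" using XY unfolding K'_def by blast
          then show ?thesis using KK XK XY(3) by blast
        qed
      qed
    qed
    show "\<forall>X\<in>K'. \<forall>Y. goodm ?W' Y \<longrightarrow> ereal r \<le> setdist G (V X) (V Y)"
    proof (intro ballI allI impI)
      fix X Y assume XY: "X \<in> K'" "goodm ?W' Y"
      show "ereal r \<le> setdist G (V X) (V Y)"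
      proof (cases "X = X0")
        case True then show ?thesis using farX0[OF XY(2)] by simp
      next
        case False
        then have "X \<in> K" using XY unfolding K'_def by blast
        moreover have "goodm ?W Y" using goodm_mono[OF XY(2)] by blast
        ultimately show ?thesis using KG by blast
      qed
    qed
    have g: "card (gcs ?W) \<le> card (gcs ?W') + 1" using card_gcs_keep[OF SL C Sep] .
    have c1: "card (S \<union> Sep) \<le> card S + 3 * (\<theta> - 1)" using card_Un_le[of S Sep] cS by linarith
    have c0: "card S = 0 \<or> card S + (\<theta> - 1) \<le> (\<theta> - 1) * (card (gcs ?W) + 4 * card K)"
      using cost by auto
    have "card (S \<union> Sep) + (\<theta> - 1) \<le> (\<theta> - 1) * (card (gcs ?W') + 4 * (card K + 1))"
      using arith_kill[OF c0 c1 g] .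
    then show "S \<union> Sep = {} \<or> card (S \<union> Sep) + (\<theta> - 1) \<le> (\<theta> - 1) * (card (gcs ?W') + 4 * card K')"
      using cK' by simp
  qed
  then show ?thesis using Sne by blast
qed

end



context setting begin

lemma split_step:
  assumes I: "Inv S K" and C: "C \<in> gcs (Zc S)" and Sep: "Sep \<subseteq> V C"
    and cS: "card Sep \<le> \<theta> - 1"
    and XA: "goodm (Zc S \<union> Sep) XA" "subgraph XA C" "a \<in> V XA"
    and XB: "goodm (Zc S \<union> Sep) XB" "subgraph XB C" "b \<in> V XB"
    and ns: "\<forall>C'. component C' (del L (Zc S \<union> Sep)) \<longrightarrow> a \<in> V C' \<longrightarrow> b \<notin> V C'"
  shows "Inv (S \<union> Sep) K \<and> Sep \<noteq> {}"
proof -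
  let ?W = "Zc S"
  let ?W' = "Zc S \<union> Sep"
  have SL: "S \<subseteq> V L" and KF: "K \<subseteq> F" and Kb: "\<forall>X\<in>K. V X \<inter> ball G r' ?W \<noteq> {}"
    and KK: "\<forall>X\<in>K. \<forall>Y\<in>K. X \<noteq> Y \<longrightarrow> ereal r \<le> setdist G (V X) (V Y)"
    and KG: "\<forall>X\<in>K. \<forall>Y. goodm ?W Y \<longrightarrow> ereal r \<le> setdist G (V X) (V Y)"
    and cost: "S = {} \<or> card S + (\<theta> - 1) \<le> (\<theta> - 1) * (card (gcs ?W) + 4 * card K)"
    using I unfolding Inv_def by blast+
  have Cc: "component C (del L ?W)" using C gcs_comp by blast
  have VC: "V C \<subseteq> V L" "V C \<inter> ?W = {}" using comp_sub[OF Cc] by auto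
  have aC: "a \<in> V C" using XA(2,3) unfolding subgraph_def by blast
  have bC: "b \<in> V C" using XB(2,3) unfolding subgraph_def by blast
  have Sne: "Sep \<noteq> {}"
  proof
    assume "Sep = {}"
    then have "component C (del L ?W')" using Cc by simp
    then show False using ns aC bC by blast
  qed
  have SepL: "S \<union> Sep \<subseteq> V L" using SL Sep VC by blast
  have W': "Zc (S \<union> Sep) = ?W'" by (rule Zc_Un)
  have bW: "ball G r' ?W \<subseteq> ball G r' ?W'" by (rule ball_mono) auto
  have W'b: "?W' \<subseteq> ball G r' ?W'" using Zc_ball[OF SepL] W' by simp
  have newcomp: "\<exists>CA. CA \<in> gcs ?W' \<and> x \<in> V CA \<and> CA \<notin> gcs ?W - {C}"
    if X: "goodm ?W' X" "subgraph X C" "x \<in> V X" for X x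
  proof -
    have XF: "X \<in> F" using X(1) unfolding goodm_def by blast
    have "V X \<inter> ?W' = {}" using X(1) W'b unfolding goodm_def by blast
    from member_comp[OF XF this] obtain CA where CA: "component CA (del L ?W')" "subgraph X CA" by blast
    have xCA: "x \<in> V CA" using CA(2) X(3) unfolding subgraph_def by blast
    have "CA \<in> gcs ?W'" using CA X(1) unfolding gcs_def goodc_def by blast
    moreover have "CA \<notin> gcs ?W - {C}"
    proof
      assume "CA \<in> gcs ?W - {C}"
      then have "component CA (del L ?W)" "CA \<noteq> C" using gcs_comp by auto
      moreover have "x \<in> V C" using X(2,3) unfolding subgraph_def by blast
      ultimately show False using comp_eq[OF _ Cc xCA] by blast
    qed
    ultimately show ?thesis using xCA by blast
  qed
  obtain CA where CA: "CA \<in> gcs ?W'" "a \<in> V CA" "CA \<notin> gcs ?W - {C}" using newcomp[OF XA] by blast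
  obtain CB where CB: "CB \<in> gcs ?W'" "b \<in> V CB" "CB \<notin> gcs ?W - {C}" using newcomp[OF XB] by blast
  have "CA \<noteq> CB" using ns CA(1,2) CB(2) gcs_comp by blast
  have sub: "insert CA (insert CB (gcs ?W - {C})) \<subseteq> gcs ?W'"
    using gcs_keep[OF SL C Sep] CA(1) CB(1) by blast
  have "card (insert CA (insert CB (gcs ?W - {C}))) = card (gcs ?W - {C}) + 2"
    using CA(3) CB(3) \<open>CA \<noteq> CB\<close> fin_gcs by simp
  moreover have "card (gcs ?W - {C}) = card (gcs ?W) - 1" using C fin_gcs by simp
  moreover have "card (insert CA (insert CB (gcs ?W - {C}))) \<le> card (gcs ?W')"
    using sub fin_gcs by (rule card_mono[rotated])
  moreover have g1: "1 \<le> card (gcs ?W)" using gcs_pos[OF C] .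
  ultimately have g: "card (gcs ?W) + 1 \<le> card (gcs ?W')" by linarith
  have "Inv (S \<union> Sep) K"
    unfolding Inv_def W'
  proof (intro conjI)
    show "S \<union> Sep \<subseteq> V L" by (rule SepL)
    show "K \<subseteq> F" by (rule KF)
    show "\<forall>X\<in>K. V X \<inter> ball G r' ?W' \<noteq> {}" using Kb bW by blast
    show "\<forall>X\<in>K. \<forall>Y\<in>K. X \<noteq> Y \<longrightarrow> ereal r \<le> setdist G (V X) (V Y)" by (rule KK)
    show "\<forall>X\<in>K. \<forall>Y. goodm ?W' Y \<longrightarrow> ereal r \<le> setdist G (V X) (V Y)"
      using KG goodm_mono[of ?W' _ ?W] by blast
    have c1: "card (S \<union> Sep) \<le> card S + (\<theta> - 1)" using card_Un_le[of S Sep] cS by linarith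
    have c0: "card S = 0 \<or> card S + (\<theta> - 1) \<le> (\<theta> - 1) * (card (gcs ?W) + 4 * card K)"
      using cost by auto
    have "card (S \<union> Sep) + (\<theta> - 1) \<le> (\<theta> - 1) * (card (gcs ?W') + 4 * card K)"
      using arith_split[OF c0 c1 g g1] .
    then show "S \<union> Sep = {} \<or> card (S \<union> Sep) + (\<theta> - 1) \<le> (\<theta> - 1) * (card (gcs ?W') + 4 * card K)"
      by simp
  qed
  then show ?thesis using Sne by blast
qed

lemma sep_parts:
  "separation C A B \<Longrightarrow> subgraph A C \<and> subgraph B C \<and> V A \<union> V B = V C \<and> E A \<union> E B = E C"
  unfolding separation_def by (elim conjE) (intro conjI)

lemma sep_apart:
  assumes sep: "separation C A B" and Cc: "component C (del L W)"
    and a: "a \<in> V A" "a \<notin> V A \<inter> V B" "a \<in> V C" and b: "b \<in> V B"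
    and C': "component C' (del L (W \<union> (V A \<inter> V B)))" "a \<in> V C'"
  shows "b \<notin> V C'"
proof
  assume bC': "b \<in> V C'"
  have sp: "subgraph A C" "subgraph B C" "E A \<union> E B = E C" using sep_parts[OF sep] by auto
  have "subgraph C' (del L W)" using comp_sub_del[OF C'(1)] by blast
  moreover have "connected C'" using C'(1) unfolding component_def by blast
  ultimately have sC': "subgraph C' C" using subcomp[OF _ _ Cc C'(2) a(3)] by blast
  obtain n where rn: "reach C' n a b" using \<open>connected C'\<close> C'(2) bC' unfolding connected_def by blast
  have VC': "V C' \<inter> (V A \<inter> V B) = {}" using comp_sub[OF C'(1)] by auto
  have "b \<in> V A - V B"
  proof (rule reach_prop[OF rn, where P="\<lambda>v. v \<in> V A - V B"])
    show "a \<in> V A - V B" using a by blast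
    fix u w assume uw: "{u,w} \<in> E C'" "u \<in> V C'" "w \<in> V C'" "u \<in> V A - V B"
    have "{u,w} \<in> E C" using uw(1) sC' unfolding subgraph_def by blast
    moreover have "{u,w} \<notin> E B" using uw(4) sp(2) unfolding subgraph_def by blast
    ultimately have "{u,w} \<in> E A" using sp(3) by blast
    then have "w \<in> V A" using sp(1) unfolding subgraph_def by blast
    then show "w \<in> V A - V B" using uw(3) VC' by blast
  qed
  then show False using b by blast
qed

end



lemma prop4: "\<not> (P1 \<and> P2 \<and> P3 \<and> P4) \<Longrightarrow> P1 \<Longrightarrow> P4 \<Longrightarrow> \<not> P2 \<or> \<not> P3" by blast

context setting begin

lemma Fav_iff: "X \<in> avoid (members_in F C) (ball G r' W) \<longleftrightarrow> goodm W X \<and> subgraph X C"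
  unfolding avoid_def members_in_def goodm_def by blast

definition has :: "'a set \<Rightarrow> 'a ugraph \<Rightarrow> 'a ugraph \<Rightarrow> 'a set \<Rightarrow> bool" where
  "has W C A Sp \<longleftrightarrow> (\<exists>X. goodm W X \<and> subgraph X C \<and> subgraph X (del A (ball G r' Sp)))"

lemma Tm: "(A,B) \<in> gtangle G (members_in F C) r' \<theta> W C \<longleftrightarrow>
  separation C A B \<and> sep_order A B < \<theta> \<and> \<not> has W C A (V A \<inter> V B) \<and> has W C B (V A \<inter> V B)"
  unfolding gtangle_def has_def mem_Collect_eq case_prod_conv Bex_def Fav_iff by (simp only: conj_assoc)

lemma side_X:
  assumes sep: "separation C A B" and Cc: "component C (del L W)"
    and X: "goodm W X" "subgraph X C" and Xb: "V X \<inter> ball G r' (V A \<inter> V B) = {}"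
  shows "(subgraph X A \<or> subgraph X B) \<and> V X \<inter> (V A \<inter> V B) = {}"
proof -
  have VCL: "V C \<subseteq> V L" using comp_sub[OF Cc] by auto
  have sp: "subgraph A C" "subgraph B C" "V A \<union> V B = V C" "E A \<union> E B = E C" using sep_parts[OF sep] by auto
  have "V A \<inter> V B \<subseteq> V G" using sp(3) VCL VL by blast
  then have "V A \<inter> V B \<subseteq> ball G r' (V A \<inter> V B)" using ball_self[OF r'0, of "V A \<inter> V B" G] by blast
  then have d: "V X \<inter> (V A \<inter> V B) = {}" using Xb by blast
  have cX: "connected X" using X(1) F unfolding goodm_def by blast
  have ne: "\<forall>e\<in>E C. e \<noteq> {}"
  proof
    fix e assume "e \<in> E C"
    then have "e \<in> E L" using comp_sub[OF Cc] by auto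
    then show "e \<noteq> {}" by (rule edge_ne)
  qed
  show ?thesis using side[OF sep cX X(2) d ne] d by blast
qed

lemma T_side:
  assumes T: "(A,B) \<in> gtangle G (members_in F C) r' \<theta> W C" and Cc: "component C (del L W)"
    and X: "goodm W X" "subgraph X C" and Xb: "V X \<inter> ball G r' (V A \<inter> V B) = {}"
  shows "V X \<inter> V A = {}"
proof -
  have t: "separation C A B" "\<not> has W C A (V A \<inter> V B)" using T unfolding Tm by auto
  have s: "(subgraph X A \<or> subgraph X B) \<and> V X \<inter> (V A \<inter> V B) = {}" using side_X[OF t(1) Cc X Xb] .
  have "\<not> subgraph X A"
  proof
    assume "subgraph X A"
    then have "subgraph X (del A (ball G r' (V A \<inter> V B)))" using Xb by (rule subgraph_del)
    then show False using t(2) X unfolding has_def by blast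
  qed
  then have "V X \<subseteq> V B" using s unfolding subgraph_def by blast
  then show ?thesis using s by blast
qed

lemma tangle_fail:
  assumes SL: "S \<subseteq> V L" and C: "C \<in> gcs (Zc S)"
    and nt: "\<not> gtangle_exists G (members_in F C) r' \<theta> (Zc S) C"
  shows "(\<exists>Sep\<subseteq>V C. card Sep \<le> 3 * (\<theta> - 1) \<and>
            (\<forall>X. goodm (Zc S) X \<and> subgraph X C \<longrightarrow> V X \<inter> ball G r' Sep \<noteq> {})) \<or>
         (\<exists>Sep\<subseteq>V C. card Sep \<le> \<theta> - 1 \<and> (\<exists>XA XB a b.
            goodm (Zc S \<union> Sep) XA \<and> subgraph XA C \<and> a \<in> V XA \<and>
            goodm (Zc S \<union> Sep) XB \<and> subgraph XB C \<and> b \<in> V XB \<and>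
            (\<forall>C'. component C' (del L (Zc S \<union> Sep)) \<longrightarrow> a \<in> V C' \<longrightarrow> b \<notin> V C')))"
proof -
  let ?W = "Zc S"
  define T where "T = gtangle G (members_in F C) r' \<theta> ?W C"
  have Cc: "component C (del L ?W)" using C gcs_comp by blast
  have VCL: "V C \<subseteq> V L" using comp_sub[OF Cc] by auto
  have finC: "finite (V C)" using VCL finVL by (rule finite_subset)
  have c1: "\<forall>(A,B)\<in>T. separation C A B \<and> sep_order A B < \<theta>"
  proof
    fix p assume "p \<in> T"
    moreover obtain A B where "p = (A,B)" by (cases p)
    ultimately show "case p of (A,B) \<Rightarrow> separation C A B \<and> sep_order A B < \<theta>"
      unfolding T_def using Tm by simp
  qed
  have c4: "\<forall>(A,B)\<in>T. V A \<noteq> V C"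
  proof
    fix p assume "p \<in> T"
    moreover obtain A B where p: "p = (A,B)" by (cases p)
    ultimately have AB: "(A,B) \<in> T" by simp
    have "V A \<noteq> V C"
    proof
      assume VA: "V A = V C"
      have sep: "separation C A B" and hB: "has ?W C B (V A \<inter> V B)" using AB unfolding T_def Tm by auto
      have "V B \<subseteq> V C" using sep_parts[OF sep] by auto
      then have VB: "V A \<inter> V B = V B" using VA by blast
      obtain X where X: "goodm ?W X" "subgraph X (del B (ball G r' (V A \<inter> V B)))"
        using hB unfolding has_def by blast
      have "V X \<subseteq> V B - ball G r' (V B)" using X(2) VB unfolding subgraph_def by auto
      moreover have "V B \<subseteq> V G" using \<open>V B \<subseteq> V C\<close> VCL VL by blast
      moreover have "V B \<subseteq> ball G r' (V B)" using ball_self[OF r'0, of "V B" G] calculation(2) by blast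
      ultimately have "V X = {}" by blast
      moreover have "connected X" using X(1) F unfolding goodm_def by blast
      ultimately show False using conn_ne by blast
    qed
    then show "case p of (A,B) \<Rightarrow> V A \<noteq> V C" using p by simp
  qed
  have nt': "\<not> ((\<forall>(A,B)\<in>T. separation C A B \<and> sep_order A B < \<theta>) \<and>
     (\<forall>A B. separation C A B \<and> sep_order A B < \<theta> \<longrightarrow> (A,B) \<in> T \<or> (B,A) \<in> T) \<and>
     (\<forall>(A1,B1)\<in>T. \<forall>(A2,B2)\<in>T. \<forall>(A3,B3)\<in>T.
         \<not> (V A1 \<union> V A2 \<union> V A3 = V C \<and> E A1 \<union> E A2 \<union> E A3 = E C)) \<and>
     (\<forall>(A,B)\<in>T. V A \<noteq> V C))"
    using nt unfolding gtangle_exists_def is_tangle_def T_def .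
  from prop4[OF nt' c1 c4] show ?thesis
  proof
    assume "\<not> (\<forall>A B. separation C A B \<and> sep_order A B < \<theta> \<longrightarrow> (A,B) \<in> T \<or> (B,A) \<in> T)"
    then obtain A B where AB: "separation C A B" "sep_order A B < \<theta>" "(A,B) \<notin> T" "(B,A) \<notin> T" by blast
    define Sp where "Sp = V A \<inter> V B"
    have BA: "V B \<inter> V A = Sp" unfolding Sp_def by blast
    have sepBA: "separation C B A" using AB(1) by (rule separation_sym)
    have oBA: "sep_order B A < \<theta>" using AB(2) unfolding sep_order_def by (simp add: Int_commute)
    have n1: "\<not> (\<not> has ?W C A Sp \<and> has ?W C B Sp)" using AB(1-3) unfolding T_def Tm Sp_def by blast
    have n2: "\<not> (\<not> has ?W C B Sp \<and> has ?W C A Sp)" using sepBA oBA AB(4) unfolding T_def Tm BA by blast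
    have sp: "subgraph A C" "subgraph B C" "V A \<union> V B = V C" "E A \<union> E B = E C" using sep_parts[OF AB(1)] by auto
    have SpC: "Sp \<subseteq> V C" unfolding Sp_def using sp(3) by blast
    have cSp: "card Sp \<le> \<theta> - 1" using AB(2) unfolding sep_order_def Sp_def by linarith
    have SpG: "Sp \<subseteq> V G" using SpC VCL VL by blast
    have Spb: "Sp \<subseteq> ball G r' Sp" using ball_self[OF r'0, of Sp G] SpG by blast
    show ?thesis
    proof (cases "has ?W C A Sp")
      case True
      then have hB: "has ?W C B Sp" using n2 by blast
      obtain XA where XA: "goodm ?W XA" "subgraph XA C" "subgraph XA (del A (ball G r' Sp))"
        using True unfolding has_def by blast
      obtain XB where XB: "goodm ?W XB" "subgraph XB C" "subgraph XB (del B (ball G r' Sp))"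
        using hB unfolding has_def by blast
      have gA: "goodm (?W \<union> Sp) XA" using XA(1) subgraph_delD[OF XA(3)] unfolding goodm_def ball_Un by blast
      have gB: "goodm (?W \<union> Sp) XB" using XB(1) subgraph_delD[OF XB(3)] unfolding goodm_def ball_Un by blast
      obtain a where a: "a \<in> V XA" using conn_ne F XA(1) unfolding goodm_def by blast
      obtain b where b: "b \<in> V XB" using conn_ne F XB(1) unfolding goodm_def by blast
      have aA: "a \<in> V A" "a \<notin> V A \<inter> V B" "a \<in> V C"
        using a subgraph_delD[OF XA(3)] XA(2) Spb unfolding subgraph_def Sp_def by auto
      have bB: "b \<in> V B" using b subgraph_delD[OF XB(3)] unfolding subgraph_def by auto
      have ns: "\<forall>C'. component C' (del L (?W \<union> Sp)) \<longrightarrow> a \<in> V C' \<longrightarrow> b \<notin> V C'"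
        using sep_apart[OF AB(1) Cc aA bB] unfolding Sp_def by blast
      have "\<exists>XA XB a b.
            goodm (?W \<union> Sp) XA \<and> subgraph XA C \<and> a \<in> V XA \<and>
            goodm (?W \<union> Sp) XB \<and> subgraph XB C \<and> b \<in> V XB \<and>
            (\<forall>C'. component C' (del L (?W \<union> Sp)) \<longrightarrow> a \<in> V C' \<longrightarrow> b \<notin> V C')"
        by (intro exI[of _ XA] exI[of _ XB] exI[of _ a] exI[of _ b] conjI gA XA(2) a gB XB(2) b ns)
      then show ?thesis using SpC cSp by (intro disjI2 exI[of _ Sp] conjI)
    next
      case False
      then have nB: "\<not> has ?W C B Sp" using n1 by blast
      have kp: "\<forall>X. goodm ?W X \<and> subgraph X C \<longrightarrow> V X \<inter> ball G r' Sp \<noteq> {}"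
      proof (intro allI impI)
        fix X assume X: "goodm ?W X \<and> subgraph X C"
        show "V X \<inter> ball G r' Sp \<noteq> {}"
        proof
          assume e: "V X \<inter> ball G r' Sp = {}"
          then have "subgraph X A \<or> subgraph X B" using side_X[OF AB(1) Cc, of X] X unfolding Sp_def by blast
          then show False
          proof
            assume "subgraph X A"
            then have "subgraph X (del A (ball G r' Sp))" using e by (rule subgraph_del)
            then show False using False X unfolding has_def by blast
          next
            assume "subgraph X B"
            then have "subgraph X (del B (ball G r' Sp))" using e by (rule subgraph_del)
            then show False using nB X unfolding has_def by blast
          qed
        qed
      qed
      have "card Sp \<le> 3 * (\<theta> - 1)" using cSp by linarith
      then show ?thesis using SpC kp by (intro disjI1 exI[of _ Sp] conjI)
    qed
  next
    assume "\<not> (\<forall>(A1,B1)\<in>T. \<forall>(A2,B2)\<in>T. \<forall>(A3,B3)\<in>T.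
         \<not> (V A1 \<union> V A2 \<union> V A3 = V C \<and> E A1 \<union> E A2 \<union> E A3 = E C))"
    then obtain A1 B1 A2 B2 A3 B3 where T3: "(A1,B1) \<in> T" "(A2,B2) \<in> T" "(A3,B3) \<in> T"
      "V A1 \<union> V A2 \<union> V A3 = V C" by (auto simp: case_prod_beta)
    define Sp where "Sp = (V A1 \<inter> V B1) \<union> (V A2 \<inter> V B2) \<union> (V A3 \<inter> V B3)"
    have o: "card (V A1 \<inter> V B1) < \<theta>" "card (V A2 \<inter> V B2) < \<theta>" "card (V A3 \<inter> V B3) < \<theta>"
      using T3(1-3) unfolding T_def Tm sep_order_def by auto
    have "card Sp \<le> card (V A1 \<inter> V B1) + card (V A2 \<inter> V B2) + card (V A3 \<inter> V B3)"
      unfolding Sp_def by (meson add_le_mono1 card_Un_le order_trans)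
    then have cSp: "card Sp \<le> 3 * (\<theta> - 1)" using o by linarith
    have s1: "separation C A1 B1" "separation C A2 B2" "separation C A3 B3"
      using T3(1-3) unfolding T_def Tm by auto
    have "V A1 \<union> V B1 = V C" "V A2 \<union> V B2 = V C" "V A3 \<union> V B3 = V C"
      using sep_parts[OF s1(1)] sep_parts[OF s1(2)] sep_parts[OF s1(3)] by auto
    then have SpC: "Sp \<subseteq> V C" unfolding Sp_def by blast
    have kp: "\<forall>X. goodm ?W X \<and> subgraph X C \<longrightarrow> V X \<inter> ball G r' Sp \<noteq> {}"
    proof (intro allI impI)
      fix X assume X: "goodm ?W X \<and> subgraph X C"
      show "V X \<inter> ball G r' Sp \<noteq> {}"
      proof
        assume e: "V X \<inter> ball G r' Sp = {}"
        have b1: "ball G r' (V A1 \<inter> V B1) \<subseteq> ball G r' Sp" by (rule ball_mono) (auto simp: Sp_def)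
        have b2: "ball G r' (V A2 \<inter> V B2) \<subseteq> ball G r' Sp" by (rule ball_mono) (auto simp: Sp_def)
        have b3: "ball G r' (V A3 \<inter> V B3) \<subseteq> ball G r' Sp" by (rule ball_mono) (auto simp: Sp_def)
        have "V X \<inter> V A1 = {}" using T_side[OF T3(1)[unfolded T_def] Cc] X e b1 by blast
        moreover have "V X \<inter> V A2 = {}" using T_side[OF T3(2)[unfolded T_def] Cc] X e b2 by blast
        moreover have "V X \<inter> V A3 = {}" using T_side[OF T3(3)[unfolded T_def] Cc] X e b3 by blast
        moreover have "V X \<subseteq> V C" using X unfolding subgraph_def by blast
        ultimately have "V X = {}" using T3(4) by blast
        moreover have "connected X" using X F unfolding goodm_def by blast
        ultimately show False using conn_ne by blast
      qed
    qed
    show ?thesis using SpC cSp kp by (intro disjI1 exI[of _ Sp] conjI)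
  qed
qed

end



lemma arith_final:
  fixes cS t g kk k :: nat
  assumes h: "cS + t \<le> t * (g + 4 * kk)" and p: "g + kk < k"
  shows "real cS \<le> max (2 * real k - 3) 1 * (3 * real t)"
proof -
  have h1: "real cS + real t \<le> real t * (real g + 4 * real kk)"
    using h by (metis of_nat_add of_nat_le_iff of_nat_mult of_nat_numeral)
  have "g + kk + 1 \<le> k" using p by simp
  then have "real (g + kk + 1) \<le> real k" by (simp only: of_nat_le_iff)
  then have "real g + real kk + 1 \<le> real k" by simp
  moreover have "0 \<le> real g" by simp
  ultimately have p1: "real g + 4 * real kk \<le> 4 * (real k - 1)" by (smt (verit))
  have "real t * (real g + 4 * real kk) \<le> real t * (4 * (real k - 1))"
    using p1 by (intro mult_left_mono) auto
  then have c: "real cS \<le> real t * (4 * real k - 5)" using h1 by (simp add: algebra_simps)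
  have t0: "0 \<le> real t" by simp
  show ?thesis
  proof (cases "k \<ge> 2")
    case True
    then have "4 * real k - 5 \<le> 3 * max (2 * real k - 3) 1" by (simp add: max_def)
    then have "real t * (4 * real k - 5) \<le> real t * (3 * max (2 * real k - 3) 1)"
      using t0 by (rule mult_left_mono)
    then show ?thesis using c by (simp add: algebra_simps)
  next
    case False
    then have "4 * real k - 5 \<le> 0" using p by simp
    then have "real t * (4 * real k - 5) \<le> 0" using t0 by (simp add: mult_nonneg_nonpos)
    moreover have "0 \<le> max (2 * real k - 3) 1 * (3 * real t)" by simp
    ultimately show ?thesis using c by linarith
  qed
qed

context setting begin

lemma Inv_init: "Inv {} {}"
  unfolding Inv_def by simp

lemma iterate:
  "Inv S K \<Longrightarrow> \<exists>S' K'. Inv S' K' \<and> (\<forall>C\<in>gcs (Zc S'). gtangle_exists G (members_in F C) r' \<theta> (Zc S') C)"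
proof (induction "card (V L - Zc S)" arbitrary: S K rule: less_induct)
  case less
  show ?case
  proof (cases "\<forall>C\<in>gcs (Zc S). gtangle_exists G (members_in F C) r' \<theta> (Zc S) C")
    case True
    then show ?thesis using less.prems by blast
  next
    case False
    then obtain C where C: "C \<in> gcs (Zc S)" "\<not> gtangle_exists G (members_in F C) r' \<theta> (Zc S) C" by blast
    have SL: "S \<subseteq> V L" using less.prems unfolding Inv_def by blast
    have "\<exists>Sep K'. Inv (S \<union> Sep) K' \<and> Sep \<noteq> {} \<and> Sep \<subseteq> V C"
      using tangle_fail[OF SL C]
    proof
      assume "\<exists>Sep\<subseteq>V C. card Sep \<le> 3 * (\<theta> - 1) \<and>
            (\<forall>X. goodm (Zc S) X \<and> subgraph X C \<longrightarrow> V X \<inter> ball G r' Sep \<noteq> {})"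
      then obtain Sep where Sep: "Sep \<subseteq> V C" "card Sep \<le> 3 * (\<theta> - 1)"
         "\<forall>X. goodm (Zc S) X \<and> subgraph X C \<longrightarrow> V X \<inter> ball G r' Sep \<noteq> {}" by blast
      from kill_step[OF less.prems C(1) Sep] Sep(1) show ?thesis by blast
    next
      assume "\<exists>Sep\<subseteq>V C. card Sep \<le> \<theta> - 1 \<and> (\<exists>XA XB a b.
            goodm (Zc S \<union> Sep) XA \<and> subgraph XA C \<and> a \<in> V XA \<and>
            goodm (Zc S \<union> Sep) XB \<and> subgraph XB C \<and> b \<in> V XB \<and>
            (\<forall>C'. component C' (del L (Zc S \<union> Sep)) \<longrightarrow> a \<in> V C' \<longrightarrow> b \<notin> V C'))"
      then obtain Sep XA XB a b where Sep: "Sep \<subseteq> V C" "card Sep \<le> \<theta> - 1"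
            "goodm (Zc S \<union> Sep) XA" "subgraph XA C" "a \<in> V XA"
            "goodm (Zc S \<union> Sep) XB" "subgraph XB C" "b \<in> V XB"
            "\<forall>C'. component C' (del L (Zc S \<union> Sep)) \<longrightarrow> a \<in> V C' \<longrightarrow> b \<notin> V C'" by blast
      from split_step[OF less.prems C(1) Sep] Sep(1) show ?thesis by blast
    qed
    then obtain Sep K' where N: "Inv (S \<union> Sep) K'" "Sep \<noteq> {}" "Sep \<subseteq> V C" by blast
    have Cc: "component C (del L (Zc S))" using C(1) gcs_comp by blast
    have VC: "V C \<subseteq> V L - Zc S" using comp_sub[OF Cc] by auto
    have "V L - Zc (S \<union> Sep) \<subset> V L - Zc S"
      unfolding Zc_Un using N(2,3) VC by blast
    then have "card (V L - Zc (S \<union> Sep)) < card (V L - Zc S)"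
      using finVL by (meson finite_Diff psubset_card_mono)
    from less.hyps[OF this N(1)] show ?thesis .
  qed
qed

end



context setting begin

lemma comp_induced_L: "component H (del L W) \<Longrightarrow> induced_subgraph H L"
proof -
  assume H: "component H (del L W)"
  have s: "V H \<subseteq> V L - W" "E H = {e\<in>E L. e \<inter> W = {} \<and> e \<subseteq> V H}" using comp_sub[OF H] by auto
  then have "E H = {e\<in>E L. e \<subseteq> V H}" by blast
  then show ?thesis using s(1) unfolding induced_subgraph_def by blast
qed

lemma main:
  assumes theta: "\<theta> \<ge> 1" and eta: "\<eta> \<ge> 0" and Zc: "centered G \<xi> \<eta> Z"
  shows "\<exists>Zs \<H>. Zs \<subseteq> V G \<and> ball G r' Z \<subseteq> Zs \<and> Zs \<subseteq> ball G r' Z \<union> V L \<and>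
     finite \<H> \<and> card \<H> \<le> k - 1 \<and>
     (\<forall>H\<in>\<H>. induced_subgraph H L \<and> connected H) \<and>
     (\<forall>H1\<in>\<H>. \<forall>H2\<in>\<H>. H1 \<noteq> H2 \<longrightarrow> V H1 \<inter> V H2 = {}) \<and>
     centered G (\<xi> + max (2 * real k - 3) 1 * (3 * real \<theta> - 3)) (\<eta> + 2 * r') Zs \<and>
     (\<forall>X\<in>F - members_in F (gunion \<H>). V X \<inter> Zs \<noteq> {}) \<and>
     centered G (max (2 * real k - 3) 1 * (3 * real \<theta> - 3)) (2 * r') (Zs - ball G (2 * r') Z) \<and>
     (\<forall>H\<in>\<H>. gtangle_exists G (members_in F H) r' \<theta> Zs H \<and> nbhd G (V H) \<subseteq> Zs \<and>
        (\<forall>C. component C (del L Zs) \<and> V H \<inter> V C \<noteq> {} \<longrightarrow> subgraph C H))"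
proof -
  obtain S K where I: "Inv S K" and Done: "\<forall>C\<in>gcs (Zc S). gtangle_exists G (members_in F C) r' \<theta> (Zc S) C"
    using iterate[OF Inv_init] by blast
  define W where "W = Zc S"
  define Hs where "Hs = gcs W"
  define Ext where "Ext = (ball G r' W \<inter> V L) - (\<Union>H\<in>Hs. V H)"
  define Zs where "Zs = W \<union> Ext"
  have SL: "S \<subseteq> V L" using I unfolding Inv_def by blast
  have cost: "S = {} \<or> card S + (\<theta> - 1) \<le> (\<theta> - 1) * (card Hs + 4 * card K)"
    using I unfolding Inv_def Hs_def W_def by blast
  have pk: "card Hs + card K < k" using packing[OF I] unfolding Hs_def W_def .
  have WG: "W \<subseteq> V G" unfolding W_def using Zc_sub[OF SL] .
  have Wb: "W \<subseteq> ball G r' W" unfolding W_def using Zc_ball[OF SL] .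
  have NW: "nbhd G (V L) \<subseteq> W" unfolding W_def by (rule NZc)
  have WZs: "W \<subseteq> Zs" unfolding Zs_def by blast
  have Zsb: "Zs \<subseteq> ball G r' W" unfolding Zs_def Ext_def using Wb by blast
  have Hc: "component H (del L W)" if "H \<in> Hs" for H using that gcs_comp unfolding Hs_def by blast
  have HW: "V H \<inter> W = {}" if "H \<in> Hs" for H using comp_sub[OF Hc[OF that]] by auto
  have ExtH: "Ext \<inter> V H = {}" if "H \<in> Hs" for H unfolding Ext_def using that by blast
  have finS: "finite S" using SL finVL by (rule finite_subset)
  have cardS: "real (card S) \<le> max (2 * real k - 3) 1 * (3 * real \<theta> - 3)"
  proof -
    have t: "3 * real \<theta> - 3 = 3 * real (\<theta> - 1)" using theta by (simp add: of_nat_diff)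
    have "real (card S) \<le> max (2 * real k - 3) 1 * (3 * real (\<theta> - 1))"
      using cost
    proof
      assume "S = {}"
      then have "real (card S) = 0" by simp
      moreover have "0 \<le> max (2 * real k - 3) 1 * (3 * real (\<theta> - 1))"
        by (intro mult_nonneg_nonneg) auto
      ultimately show ?thesis by linarith
    next
      assume "card S + (\<theta> - 1) \<le> (\<theta> - 1) * (card Hs + 4 * card K)"
      from arith_final[OF this pk] show ?thesis .
    qed
    then show ?thesis unfolding t .
  qed
  have bW: "ball G r' W \<subseteq> ball G (2 * r') Z \<union> ball G r' S"
  proof -
    have "ball G r' W = ball G r' (ball G r' Z) \<union> ball G r' S" unfolding W_def Zc_def by (rule ball_Un)
    moreover have "ball G r' (ball G r' Z) \<subseteq> ball G (2 * r') Z" using ball_ball[of G r' r' Z] by simp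
    ultimately show ?thesis by blast
  qed
  have Zs2: "Zs \<subseteq> ball G (2 * r') Z \<union> ball G r' S" using Zsb bW by blast
  show ?thesis
  proof (intro exI[of _ Zs] exI[of _ Hs] conjI)
    show "Zs \<subseteq> V G" unfolding Zs_def Ext_def using WG VL by blast
    show "ball G r' Z \<subseteq> Zs" unfolding Zs_def W_def Zc_def by blast
    show "Zs \<subseteq> ball G r' Z \<union> V L" unfolding Zs_def Ext_def W_def Zc_def using SL by blast
    show "finite Hs" unfolding Hs_def by (rule fin_gcs)
    show "card Hs \<le> k - 1" using pk by linarith
    show "\<forall>H\<in>Hs. induced_subgraph H L \<and> connected H"
    proof
      fix H assume "H \<in> Hs"
      then have c: "component H (del L W)" by (rule Hc)
      then have "connected H" unfolding component_def by (elim conjE)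
      then show "induced_subgraph H L \<and> connected H" using comp_induced_L[OF c] by (intro conjI)
    qed
    show "\<forall>H1\<in>Hs. \<forall>H2\<in>Hs. H1 \<noteq> H2 \<longrightarrow> V H1 \<inter> V H2 = {}"
    proof (intro ballI impI)
      fix H1 H2 assume "H1 \<in> Hs" "H2 \<in> Hs" "H1 \<noteq> H2"
      then show "V H1 \<inter> V H2 = {}" using comp_disj[OF Hc Hc] by blast
    qed
    show "centered G (\<xi> + max (2 * real k - 3) 1 * (3 * real \<theta> - 3)) (\<eta> + 2 * r') Zs"
    proof -
      obtain W0 where W0: "finite W0" "real (card W0) \<le> \<xi>" "Z \<subseteq> ball G \<eta> W0"
        using Zc unfolding centered_def by blast
      have "ball G (2 * r') Z \<subseteq> ball G (2 * r') (ball G \<eta> W0)" using W0(3) by (rule ball_mono) simp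
      also have "\<dots> \<subseteq> ball G (2 * r' + \<eta>) W0" by (rule ball_ball)
      also have "\<dots> \<subseteq> ball G (\<eta> + 2 * r') (W0 \<union> S)" by (rule ball_mono) auto
      finally have 1: "ball G (2 * r') Z \<subseteq> ball G (\<eta> + 2 * r') (W0 \<union> S)" .
      have 2: "ball G r' S \<subseteq> ball G (\<eta> + 2 * r') (W0 \<union> S)" using eta r'0 by (intro ball_mono) auto
      have "Zs \<subseteq> ball G (\<eta> + 2 * r') (W0 \<union> S)" using Zs2 1 2 by blast
      moreover have "finite (W0 \<union> S)" using W0(1) finS by blast
      moreover have "real (card (W0 \<union> S)) \<le> \<xi> + max (2 * real k - 3) 1 * (3 * real \<theta> - 3)"
      proof -
        have "card (W0 \<union> S) \<le> card W0 + card S" by (rule card_Un_le)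
        then have "real (card (W0 \<union> S)) \<le> real (card W0) + real (card S)" by linarith
        then show ?thesis using W0(2) cardS by linarith
      qed
      ultimately show ?thesis unfolding centered_def by blast
    qed
    show "\<forall>X\<in>F - members_in F (gunion Hs). V X \<inter> Zs \<noteq> {}"
    proof
      fix X assume X: "X \<in> F - members_in F (gunion Hs)"
      show "V X \<inter> Zs \<noteq> {}"
      proof
        assume e: "V X \<inter> Zs = {}"
        then have "V X \<inter> W = {}" using WZs by blast
        from member_comp[OF _ this] X obtain CX where CX: "component CX (del L W)" "subgraph X CX" by blast
        show False
        proof (cases "CX \<in> Hs")
          case True
          have "subgraph X (gunion Hs)"
            using CX(2) True unfolding subgraph_def gunion_def V_def E_def by auto
          then show False using X unfolding members_in_def by blast
        next
          case False
          have "\<not> goodm W X"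
          proof
            assume "goodm W X"
            then have "CX \<in> Hs" using CX unfolding Hs_def gcs_def goodc_def by blast
            then show False using False by blast
          qed
          then obtain x where x: "x \<in> V X" "x \<in> ball G r' W" using X unfolding goodm_def by blast
          have xL: "x \<in> V L" using x(1) X F unfolding subgraph_def by blast
          have "x \<notin> (\<Union>H\<in>Hs. V H)"
          proof
            assume "x \<in> (\<Union>H\<in>Hs. V H)"
            then obtain H where H: "H \<in> Hs" "x \<in> V H" by blast
            have "x \<in> V CX" using CX(2) x(1) unfolding subgraph_def by blast
            then have "H = CX" using comp_eq[OF Hc[OF H(1)] CX(1) H(2)] by blast
            then show False using H(1) False by blast
          qed
          then have "x \<in> Zs" unfolding Zs_def Ext_def using x xL by blast
          then show False using e x(1) by blast
        qed
      qed
    qed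
    show "centered G (max (2 * real k - 3) 1 * (3 * real \<theta> - 3)) (2 * r') (Zs - ball G (2 * r') Z)"
    proof -
      have "ball G r' S \<subseteq> ball G (2 * r') S" using r'0 by (intro ball_mono) auto
      then have "Zs - ball G (2 * r') Z \<subseteq> ball G (2 * r') S" using Zs2 by blast
      then show ?thesis unfolding centered_def using finS cardS by blast
    qed
    show "\<forall>H\<in>Hs. gtangle_exists G (members_in F H) r' \<theta> Zs H \<and> nbhd G (V H) \<subseteq> Zs \<and>
        (\<forall>C. component C (del L Zs) \<and> V H \<inter> V C \<noteq> {} \<longrightarrow> subgraph C H)"
    proof (intro ballI conjI allI impI)
      fix H assume H: "H \<in> Hs"
      have bH: "ball G r' Ext \<inter> V H \<subseteq> ball G r' W" using ball_outside[OF NW Hc[OF H] ExtH[OF H]] .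
      have aeq: "avoid (members_in F H) (ball G r' Zs) = avoid (members_in F H) (ball G r' W)"
      proof -
        have "V X \<inter> ball G r' Zs = {} \<longleftrightarrow> V X \<inter> ball G r' W = {}" if "X \<in> members_in F H" for X
        proof -
          have "V X \<subseteq> V H" using that unfolding members_in_def subgraph_def by blast
          then show ?thesis using bH unfolding Zs_def ball_Un by blast
        qed
        then show ?thesis unfolding avoid_def by blast
      qed
      have "gtangle G (members_in F H) r' \<theta> Zs H = gtangle G (members_in F H) r' \<theta> W H"
        unfolding gtangle_def aeq ..
      then show "gtangle_exists G (members_in F H) r' \<theta> Zs H"
        using Done H unfolding gtangle_exists_def Hs_def W_def by simp
      show "nbhd G (V H) \<subseteq> Zs"
      proof
        fix v assume v: "v \<in> nbhd G (V H)"
        then obtain h n where hn: "v \<in> V G" "h \<in> V H" "reach G n v h" "real n \<le> 1" "v \<notin> V H"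
          unfolding nbhd_def using ball_iff[of v G 1 "V H"] by blast
        have "n \<noteq> 0"
        proof
          assume "n = 0"
          then have "v = h" using hn(3) reach_0[of G v h] by simp
          then show False using hn(2,5) by blast
        qed
        then have "n = 1" using hn(4) by linarith
        then obtain x where x: "{v,x} \<in> E G" "reach G 0 x h" using hn(3) reach_SucE[of G 0 v h] by auto
        then have "x = h" by (simp add: reach_0)
        then have e: "{h,v} \<in> E G" using x(1) by (simp add: insert_commute)
        have hL: "h \<in> V L" "h \<notin> W" using comp_sub[OF Hc[OF H]] hn(2) by auto
        show "v \<in> Zs"
        proof (cases "v \<in> V L")
          case True
          show ?thesis
          proof (rule ccontr)
            assume "v \<notin> Zs"
            then have "v \<notin> W" using WZs by blast
            then have "{h,v} \<in> E (del L W)" using e hL True EL by auto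
            then have "v \<in> V H" using comp_closed[OF Hc[OF H]] hn(2) by blast
            then show False using hn(5) by blast
          qed
        next
          case False
          then have "v \<in> nbhd G (V L)" using nbhd_intro[OF e hL(1)] by blast
          then show ?thesis using NW WZs by blast
        qed
      qed
      fix C assume C: "component C (del L Zs) \<and> V H \<inter> V C \<noteq> {}"
      then obtain y where y: "y \<in> V C" "y \<in> V H" by blast
      have "subgraph C (del L W)" using comp_sub_del[of C Zs W] C WZs by blast
      moreover have "connected C" using C unfolding component_def by blast
      ultimately show "subgraph C H" using subcomp[OF _ _ Hc[OF H] y] by blast
    qed
  qed
qed

end


theorem lemma3p3:
  fixes G L :: "'a ugraph" and \<F> :: "'a ugraph set" and k \<theta> :: nat
    and r r' \<xi> \<eta> :: real and Z :: "'a set"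
  assumes G: "finite_graph G"
    and L: "induced_subgraph L G"
    and F: "\<forall>X\<in>\<F>. subgraph X L \<and> connected X"
    and theta: "\<theta> \<ge> 1"
    and nonneg: "r \<ge> 0" "r' \<ge> 0" "\<xi> \<ge> 0" "\<eta> \<ge> 0"
    and rr: "r' \<ge> r / 2"
    and Zsub: "Z \<subseteq> V G" and NZ: "nbhd G (V L) \<subseteq> Z"
    and Zc: "centered G \<xi> \<eta> Z"
    and nopack: "\<not> (\<exists>\<S>\<subseteq>\<F>. finite \<S> \<and> card \<S> = k \<and>
                    (\<forall>X\<in>\<S>. \<forall>Y\<in>\<S>. X \<noteq> Y \<longrightarrow> setdist G (V X) (V Y) \<ge> ereal r))"
  shows "\<exists>Zs \<H>. Zs \<subseteq> V G \<and> ball G r' Z \<subseteq> Zs \<and> Zs \<subseteq> ball G r' Z \<union> V L \<and>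
     finite \<H> \<and> card \<H> \<le> k - 1 \<and>
     (\<forall>H\<in>\<H>. induced_subgraph H L \<and> connected H) \<and>
     (\<forall>H1\<in>\<H>. \<forall>H2\<in>\<H>. H1 \<noteq> H2 \<longrightarrow> V H1 \<inter> V H2 = {}) \<and>
     centered G (\<xi> + max (2 * real k - 3) 1 * (3 * real \<theta> - 3)) (\<eta> + 2 * r') Zs \<and>
     (\<forall>X\<in>\<F> - members_in \<F> (gunion \<H>). V X \<inter> Zs \<noteq> {}) \<and>
     centered G (max (2 * real k - 3) 1 * (3 * real \<theta> - 3)) (2 * r') (Zs - ball G (2 * r') Z) \<and>
     (\<forall>H\<in>\<H>. gtangle_exists G (members_in \<F> H) r' \<theta> Zs H \<and> nbhd G (V H) \<subseteq> Zs \<and>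
        (\<forall>C. component C (del L Zs) \<and> V H \<inter> V C \<noteq> {} \<longrightarrow> subgraph C H))"
proof -
  have rr2: "r \<le> 2 * r'" using rr by linarith
  interpret S: setting G L \<F> Z r r' \<theta> k
  proof
    show "finite_graph G" by (rule G)
    show "induced_subgraph L G" by (rule L)
    show "\<forall>X\<in>\<F>. subgraph X L \<and> Defs.connected X" by (rule F)
    show "r \<le> 2 * r'" by (rule rr2)
    show "0 \<le> r'" by (rule nonneg(2))
    show "Z \<subseteq> V G" by (rule Zsub)
    show "nbhd G (V L) \<subseteq> Z" by (rule NZ)
    show "\<not> (\<exists>S\<subseteq>\<F>. finite S \<and> card S = k \<and>
                    (\<forall>X\<in>S. \<forall>Y\<in>S. X \<noteq> Y \<longrightarrow> setdist G (V X) (V Y) \<ge> ereal r))" by (rule nopack)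
  qed
  show ?thesis by (rule S.main[OF theta nonneg(4) Zc])
qed

end
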